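(* Let $R$ be a noetherian integral domain, $n\ge1$, $R[n]=R[t]/(t^n)$, and $M$ an $R[n]$-module of finite type. Then $M$ is torsion free if and only if it is isomorphic to a submodule of a free $R[n]$-module.
   Context: An element $u=\sum_{i=0}^{n-1}u_it^i\in R[n]$ ($u_i\in R$) is a non-zero-divisor iff $u_0\ne0$; let $S_n$ be the set of non-zero-divisors. The torsion submodule $T(M)$ of $M$ is the set of $m\in M$ such that $\alpha m=0$ for some $\alpha\in S_n$; $M$ is torsion free if $T(M)=0$. *)

theory Defs
  imports "HOL-Algebra.Algebra"
begin

definition trunc_poly_ring :: "('a, 'r) ring_scheme \<Rightarrow> nat \<Rightarrow> (nat \<Rightarrow> 'a) set ring" where
  "trunc_poly_ring R n = UP R Quot (PIdl\<^bsub>UP R\<^esub> (monom (UP R) \<one>\<^bsub>R\<^esub> n))"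

definition non_zero_divisors :: "('a, 'r) ring_scheme \<Rightarrow> 'a set" where
  "non_zero_divisors A = {u \<in> carrier A. \<forall>v \<in> carrier A. u \<otimes>\<^bsub>A\<^esub> v = \<zero>\<^bsub>A\<^esub> \<longrightarrow> v = \<zero>\<^bsub>A\<^esub>}"

definition torsion :: "('a, 'r) ring_scheme \<Rightarrow> ('a, 'm, 'x) module_scheme \<Rightarrow> 'm set" where
  "torsion A M = {m \<in> carrier M. \<exists>\<alpha> \<in> non_zero_divisors A. \<alpha> \<odot>\<^bsub>M\<^esub> m = \<zero>\<^bsub>M\<^esub>}"

definition torsion_free :: "('a, 'r) ring_scheme \<Rightarrow> ('a, 'm, 'x) module_scheme \<Rightarrow> bool" where
  "torsion_free A M \<longleftrightarrow> torsion A M = {\<zero>\<^bsub>M\<^esub>}"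

definition finitely_generated_module :: "('a, 'r) ring_scheme \<Rightarrow> ('a, 'm, 'x) module_scheme \<Rightarrow> bool" where
  "finitely_generated_module A M \<longleftrightarrow>
     (\<exists>S. finite S \<and> S \<subseteq> carrier M \<and>
        (\<forall>x \<in> carrier M. \<exists>c \<in> S \<rightarrow> carrier A. x = (\<Oplus>\<^bsub>M\<^esub> s \<in> S. c s \<odot>\<^bsub>M\<^esub> s)))"

definition module_hom :: "('a, 'r) ring_scheme \<Rightarrow> ('a, 'm, 'x) module_scheme \<Rightarrow> ('a, 'n, 'y) module_scheme \<Rightarrow> ('m \<Rightarrow> 'n) set" where
  "module_hom A M N = {h. h \<in> carrier M \<rightarrow> carrier N \<and>
     (\<forall>x \<in> carrier M. \<forall>y \<in> carrier M. h (x \<oplus>\<^bsub>M\<^esub> y) = h x \<oplus>\<^bsub>N\<^esub> h y) \<and>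
     (\<forall>a \<in> carrier A. \<forall>x \<in> carrier M. h (a \<odot>\<^bsub>M\<^esub> x) = a \<odot>\<^bsub>N\<^esub> h x)}"

text \<open>The free A-module with basis indexed by I (finitely supported functions I \<rightarrow> A).
  Every free A-module is isomorphic to one of these.  The multiplicative fields are irrelevant.\<close>
definition free_module :: "('a, 'r) ring_scheme \<Rightarrow> 'i set \<Rightarrow> ('a, 'i \<Rightarrow> 'a) module" where
  "free_module A I = \<lparr>
     carrier = {f \<in> I \<rightarrow>\<^sub>E carrier A. finite {i \<in> I. f i \<noteq> \<zero>\<^bsub>A\<^esub>}},
     monoid.mult = (\<lambda>f g. undefined),
     one = undefined,
     ring.zero = (\<lambda>i \<in> I. \<zero>\<^bsub>A\<^esub>),
     ring.add = (\<lambda>f g. \<lambda>i \<in> I. f i \<oplus>\<^bsub>A\<^esub> g i),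
     module.smult = (\<lambda>a f. \<lambda>i \<in> I. a \<otimes>\<^bsub>A\<^esub> f i) \<rparr>"

definition iso_to_submodule :: "('a, 'r) ring_scheme \<Rightarrow> ('a, 'm, 'x) module_scheme \<Rightarrow> ('a, 'n, 'y) module_scheme \<Rightarrow> bool" where
  "iso_to_submodule A M F \<longleftrightarrow>
     (\<exists>N h. submodule N A F \<and> h \<in> module_hom A M F \<and> bij_betw h (carrier M) N)"

end

theory Submission
  imports Defs
begin


fun spn :: "('a, 'r) ring_scheme \<Rightarrow> ('a, 'm, 'x) module_scheme \<Rightarrow> 'm list \<Rightarrow> 'm set" where
  "spn R N [] = {\<zero>\<^bsub>N\<^esub>}"
| "spn R N (x # xs) = {c \<odot>\<^bsub>N\<^esub> x \<oplus>\<^bsub>N\<^esub> y | c y. c \<in> carrier R \<and> y \<in> spn R N xs}"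

definition lin :: "('a, 'r) ring_scheme \<Rightarrow> ('a, 'm, 'x) module_scheme \<Rightarrow> 'm set \<Rightarrow> ('m \<Rightarrow> 'a) \<Rightarrow> bool" where
  "lin R N V f \<longleftrightarrow> (\<forall>m\<in>V. f m \<in> carrier R) \<and> (\<forall>m\<in>V. \<forall>m'\<in>V. f (m \<oplus>\<^bsub>N\<^esub> m') = f m \<oplus>\<^bsub>R\<^esub> f m')
     \<and> (\<forall>r\<in>carrier R. \<forall>m\<in>V. f (r \<odot>\<^bsub>N\<^esub> m) = r \<otimes>\<^bsub>R\<^esub> f m)"

lemma (in abelian_group) ag_aux:
  assumes "a \<in> carrier G" "b \<in> carrier G" "y \<in> carrier G" "y' \<in> carrier G" "a \<oplus> y = b \<oplus> y'"
  shows "a \<ominus> b = y' \<ominus> y"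
  by (smt (verit) a_closed a_comm a_lcomm abelian_monoid.a_assoc
    abelian_monoid_axioms add.l_inv_ex assms(1,2,3,4,5) l_neg minus_eq
    minus_equality r_neg1)

lemma spn_ConsI: "c \<in> carrier R \<Longrightarrow> y \<in> spn R N xs \<Longrightarrow> c \<odot>\<^bsub>N\<^esub> x \<oplus>\<^bsub>N\<^esub> y \<in> spn R N (x # xs)"
  by auto

lemma spn_ConsI': "m = c \<odot>\<^bsub>N\<^esub> x \<oplus>\<^bsub>N\<^esub> y \<Longrightarrow> c \<in> carrier R \<Longrightarrow> y \<in> spn R N xs \<Longrightarrow> m \<in> spn R N (x # xs)"
  by auto

lemma spn_ConsE: "m \<in> spn R N (x # xs) \<Longrightarrow> (\<And>c y. m = c \<odot>\<^bsub>N\<^esub> x \<oplus>\<^bsub>N\<^esub> y \<Longrightarrow> c \<in> carrier R \<Longrightarrow> y \<in> spn R N xs \<Longrightarrow> P) \<Longrightarrow> P"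
  by auto

declare spn.simps(2)[simp del]

lemma (in abelian_group) ag_lc:
  assumes "a \<in> carrier G" "y \<in> carrier G" "y' \<in> carrier G" "a \<oplus> y = a \<oplus> y'"
  shows "y = y'"
  using assms by simp

context module
begin

lemma spn_carrier: "set xs \<subseteq> carrier M \<Longrightarrow> spn R M xs \<subseteq> carrier M"
  by (induction xs) (auto simp: spn.simps(2))

lemma spn_zero: "set xs \<subseteq> carrier M \<Longrightarrow> \<zero>\<^bsub>M\<^esub> \<in> spn R M xs"
proof (induction xs)
  case Nil then show ?case by simp
next
  case (Cons x xs)
  have eq: "\<zero>\<^bsub>M\<^esub> = \<zero> \<odot>\<^bsub>M\<^esub> x \<oplus>\<^bsub>M\<^esub> \<zero>\<^bsub>M\<^esub>" using Cons by simp
  show ?case by (rule spn_ConsI'[OF eq]) (use Cons in auto)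
qed

lemma spn_add: "set xs \<subseteq> carrier M \<Longrightarrow> u \<in> spn R M xs \<Longrightarrow> v \<in> spn R M xs \<Longrightarrow> u \<oplus>\<^bsub>M\<^esub> v \<in> spn R M xs"
proof (induction xs arbitrary: u v)
  case Nil then show ?case by simp
next
  case (Cons x xs)
  from Cons.prems(2) obtain c y where u: "u = c \<odot>\<^bsub>M\<^esub> x \<oplus>\<^bsub>M\<^esub> y" "c \<in> carrier R" "y \<in> spn R M xs"
    by (elim spn_ConsE) blast
  from Cons.prems(3) obtain d z where v: "v = d \<odot>\<^bsub>M\<^esub> x \<oplus>\<^bsub>M\<^esub> z" "d \<in> carrier R" "z \<in> spn R M xs"
    by (elim spn_ConsE) blast
  have x: "x \<in> carrier M" using Cons by auto
  have yz: "y \<in> carrier M" "z \<in> carrier M" using spn_carrier[of xs] Cons u v by auto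
  have eq: "u \<oplus>\<^bsub>M\<^esub> v = (c \<oplus> d) \<odot>\<^bsub>M\<^esub> x \<oplus>\<^bsub>M\<^esub> (y \<oplus>\<^bsub>M\<^esub> z)"
    using u v x yz by (simp add: smult_l_distr M.a_ac)
  moreover have "y \<oplus>\<^bsub>M\<^esub> z \<in> spn R M xs" using Cons u v by auto
  ultimately show ?case using u v by (intro spn_ConsI'[OF eq]) auto
qed

lemma spn_smult: "set xs \<subseteq> carrier M \<Longrightarrow> r \<in> carrier R \<Longrightarrow> u \<in> spn R M xs \<Longrightarrow> r \<odot>\<^bsub>M\<^esub> u \<in> spn R M xs"
proof (induction xs arbitrary: u)
  case Nil then show ?case by simp
next
  case (Cons x xs)
  from Cons.prems(3) obtain c y where u: "u = c \<odot>\<^bsub>M\<^esub> x \<oplus>\<^bsub>M\<^esub> y" "c \<in> carrier R" "y \<in> spn R M xs"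
    by (elim spn_ConsE) blast
  have x: "x \<in> carrier M" using Cons by auto
  have y: "y \<in> carrier M" using spn_carrier[of xs] Cons u by auto
  have eq: "r \<odot>\<^bsub>M\<^esub> u = (r \<otimes> c) \<odot>\<^bsub>M\<^esub> x \<oplus>\<^bsub>M\<^esub> (r \<odot>\<^bsub>M\<^esub> y)"
    using u x y Cons.prems by (simp add: smult_r_distr smult_assoc1)
  moreover have "r \<odot>\<^bsub>M\<^esub> y \<in> spn R M xs" using Cons u by auto
  ultimately show ?case using u Cons.prems by (intro spn_ConsI'[OF eq]) auto
qed

lemma spn_neg: "set xs \<subseteq> carrier M \<Longrightarrow> u \<in> spn R M xs \<Longrightarrow> \<ominus>\<^bsub>M\<^esub> u \<in> spn R M xs"
proof -
  assume a: "set xs \<subseteq> carrier M" "u \<in> spn R M xs"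
  then have "u \<in> carrier M" using spn_carrier by auto
  then have "\<ominus>\<^bsub>M\<^esub> u = (\<ominus> \<one>) \<odot>\<^bsub>M\<^esub> u" by (simp add: smult_l_minus)
  then show ?thesis using spn_smult a by simp
qed

lemma spn_mem: "set xs \<subseteq> carrier M \<Longrightarrow> x \<in> set xs \<Longrightarrow> x \<in> spn R M xs"
proof (induction xs)
  case Nil then show ?case by simp
next
  case (Cons a xs)
  show ?case
  proof (cases "x = a")
    case True
    then have eq: "x = \<one> \<odot>\<^bsub>M\<^esub> a \<oplus>\<^bsub>M\<^esub> \<zero>\<^bsub>M\<^esub>" using Cons by simp
    show ?thesis by (rule spn_ConsI'[OF eq]) (use spn_zero[of xs] Cons in auto)
  next
    case False
    then have "x \<in> spn R M xs" using Cons by auto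
    moreover have eq: "x = \<zero> \<odot>\<^bsub>M\<^esub> a \<oplus>\<^bsub>M\<^esub> x" using Cons by auto
    ultimately show ?thesis by (intro spn_ConsI'[OF eq]) auto
  qed
qed

lemma functionals_exist:
  assumes tf: "\<And>r x. r \<in> carrier R \<Longrightarrow> x \<in> carrier M \<Longrightarrow> r \<noteq> \<zero> \<Longrightarrow> r \<odot>\<^bsub>M\<^esub> x = \<zero>\<^bsub>M\<^esub> \<Longrightarrow> x = \<zero>\<^bsub>M\<^esub>"
  shows "set xs \<subseteq> carrier M \<Longrightarrow> \<exists>fs. (\<forall>f\<in>set fs. lin R M (spn R M xs) f) \<and>
     (\<forall>m\<in>spn R M xs. (\<forall>f\<in>set fs. f m = \<zero>) \<longrightarrow> m = \<zero>\<^bsub>M\<^esub>)"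
proof (induction xs)
  case Nil
  show ?case by (rule exI[of _ "[]"]) simp
next
  case (Cons x ys)
  let ?V = "spn R M ys" and ?W = "spn R M (x # ys)"
  have x: "x \<in> carrier M" and ys: "set ys \<subseteq> carrier M" using Cons by auto
  have Vc: "?V \<subseteq> carrier M" using spn_carrier[OF ys] .
  from Cons.IH[OF ys] obtain gs where gs_lin: "\<forall>g\<in>set gs. lin R M ?V g"
    and gs_inj: "\<forall>m\<in>?V. (\<forall>g\<in>set gs. g m = \<zero>) \<longrightarrow> m = \<zero>\<^bsub>M\<^esub>" by blast
  show ?case
  proof (cases "\<exists>c\<in>carrier R. c \<noteq> \<zero> \<and> c \<odot>\<^bsub>M\<^esub> x \<in> ?V")
    case True
    then obtain c where c: "c \<in> carrier R" "c \<noteq> \<zero>" "c \<odot>\<^bsub>M\<^esub> x \<in> ?V" by blast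
    have cW: "c \<odot>\<^bsub>M\<^esub> m \<in> ?V" if "m \<in> ?W" for m
    proof -
      from that obtain d y where m: "m = d \<odot>\<^bsub>M\<^esub> x \<oplus>\<^bsub>M\<^esub> y" "d \<in> carrier R" "y \<in> ?V"
        by (elim spn_ConsE) blast
      have y: "y \<in> carrier M" using m Vc by auto
      have "c \<odot>\<^bsub>M\<^esub> m = d \<odot>\<^bsub>M\<^esub> (c \<odot>\<^bsub>M\<^esub> x) \<oplus>\<^bsub>M\<^esub> c \<odot>\<^bsub>M\<^esub> y"
        using m c x y by (simp add: smult_r_distr smult_assoc1[symmetric] m_comm)
      then show ?thesis using spn_add[OF ys] spn_smult[OF ys] m c by simp
    qed
    have Wc: "?W \<subseteq> carrier M" using spn_carrier Cons.prems by blast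
    let ?fs = "map (\<lambda>g m. g (c \<odot>\<^bsub>M\<^esub> m)) gs"
    show ?thesis
    proof (intro exI[of _ ?fs] conjI ballI impI)
      fix f assume "f \<in> set ?fs"
      then obtain g where g: "g \<in> set gs" "f = (\<lambda>m. g (c \<odot>\<^bsub>M\<^esub> m))" by auto
      have gl: "lin R M ?V g" using gs_lin g by auto
      show "lin R M ?W f" unfolding lin_def
      proof (intro conjI ballI)
        fix m assume "m \<in> ?W" then show "f m \<in> carrier R" using gl cW g unfolding lin_def by auto
      next
        fix m m' assume mm: "m \<in> ?W" "m' \<in> ?W"
        have "c \<odot>\<^bsub>M\<^esub> (m \<oplus>\<^bsub>M\<^esub> m') = c \<odot>\<^bsub>M\<^esub> m \<oplus>\<^bsub>M\<^esub> c \<odot>\<^bsub>M\<^esub> m'"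
          using mm Wc c by (simp add: smult_r_distr subsetD)
        then show "f (m \<oplus>\<^bsub>M\<^esub> m') = f m \<oplus> f m'" using gl cW[OF mm(1)] cW[OF mm(2)] g
          unfolding lin_def by auto
      next
        fix r m assume rm: "r \<in> carrier R" "m \<in> ?W"
        have "c \<odot>\<^bsub>M\<^esub> (r \<odot>\<^bsub>M\<^esub> m) = r \<odot>\<^bsub>M\<^esub> (c \<odot>\<^bsub>M\<^esub> m)"
          using rm Wc c by (simp add: smult_assoc1[symmetric] m_comm subsetD)
        then show "f (r \<odot>\<^bsub>M\<^esub> m) = r \<otimes> f m" using gl cW[OF rm(2)] g rm unfolding lin_def by auto
      qed
    next
      fix m assume m: "m \<in> ?W" and z: "\<forall>f\<in>set ?fs. f m = \<zero>"
      have "c \<odot>\<^bsub>M\<^esub> m = \<zero>\<^bsub>M\<^esub>" using gs_inj cW[OF m] z by auto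
      then show "m = \<zero>\<^bsub>M\<^esub>" using tf c m Wc by blast
    qed
  next
    case False
    have uniq: "c = c' \<and> y = y'" if h: "c \<in> carrier R" "c' \<in> carrier R" "y \<in> ?V" "y' \<in> ?V"
      "c \<odot>\<^bsub>M\<^esub> x \<oplus>\<^bsub>M\<^esub> y = c' \<odot>\<^bsub>M\<^esub> x \<oplus>\<^bsub>M\<^esub> y'" for c c' y y'
    proof -
      have yc: "y \<in> carrier M" "y' \<in> carrier M" using h(3,4) Vc by auto
      have "(c \<ominus> c') \<odot>\<^bsub>M\<^esub> x = y' \<ominus>\<^bsub>M\<^esub> y"
      proof -
        have "(c \<ominus> c') \<odot>\<^bsub>M\<^esub> x = c \<odot>\<^bsub>M\<^esub> x \<oplus>\<^bsub>M\<^esub> (\<ominus> c') \<odot>\<^bsub>M\<^esub> x"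
          unfolding a_minus_def by (rule smult_l_distr) (use h x in auto)
        also have "\<dots> = c \<odot>\<^bsub>M\<^esub> x \<ominus>\<^bsub>M\<^esub> c' \<odot>\<^bsub>M\<^esub> x"
          unfolding a_minus_def using h x by (simp add: smult_l_minus)
        also have "\<dots> = y' \<ominus>\<^bsub>M\<^esub> y"
          by (rule M.ag_aux) (use h x yc in auto)
        finally show ?thesis .
      qed
      moreover have "y' \<ominus>\<^bsub>M\<^esub> y \<in> ?V" unfolding a_minus_def
        by (intro spn_add[OF ys] spn_neg[OF ys]) (use h in auto)
      ultimately have "(c \<ominus> c') \<odot>\<^bsub>M\<^esub> x \<in> ?V" by simp
      moreover have "c \<ominus> c' \<in> carrier R" using h(1,2) by simp
      ultimately have "c \<ominus> c' = \<zero>" using False by blast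
      then have cc: "c = c'" using h(1,2) R.r_right_minus_eq by simp
      have "y = y'" by (rule M.ag_lc[of "c \<odot>\<^bsub>M\<^esub> x"]) (use h x yc cc in auto)
      then show ?thesis using cc by simp
    qed
    define \<kappa> where "\<kappa> m = (THE c. c \<in> carrier R \<and> (\<exists>y\<in>?V. m = c \<odot>\<^bsub>M\<^esub> x \<oplus>\<^bsub>M\<^esub> y))" for m
    define \<rho> where "\<rho> m = (THE y. y \<in> ?V \<and> (\<exists>c\<in>carrier R. m = c \<odot>\<^bsub>M\<^esub> x \<oplus>\<^bsub>M\<^esub> y))" for m
    have kr: "\<kappa> (c \<odot>\<^bsub>M\<^esub> x \<oplus>\<^bsub>M\<^esub> y) = c \<and> \<rho> (c \<odot>\<^bsub>M\<^esub> x \<oplus>\<^bsub>M\<^esub> y) = y"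
      if "c \<in> carrier R" "y \<in> ?V" for c y
    proof
      show "\<kappa> (c \<odot>\<^bsub>M\<^esub> x \<oplus>\<^bsub>M\<^esub> y) = c" unfolding \<kappa>_def
      proof (rule the_equality)
        show "c \<in> carrier R \<and> (\<exists>y'\<in>?V. c \<odot>\<^bsub>M\<^esub> x \<oplus>\<^bsub>M\<^esub> y = c \<odot>\<^bsub>M\<^esub> x \<oplus>\<^bsub>M\<^esub> y')"
          using that by auto
      next
        fix c' assume "c' \<in> carrier R \<and> (\<exists>y'\<in>?V. c \<odot>\<^bsub>M\<^esub> x \<oplus>\<^bsub>M\<^esub> y = c' \<odot>\<^bsub>M\<^esub> x \<oplus>\<^bsub>M\<^esub> y')"
        then obtain y' where "c' \<in> carrier R" "y' \<in> ?V" "c \<odot>\<^bsub>M\<^esub> x \<oplus>\<^bsub>M\<^esub> y = c' \<odot>\<^bsub>M\<^esub> x \<oplus>\<^bsub>M\<^esub> y'"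
          by blast
        then show "c' = c" using uniq[of c c' y y'] that by simp
      qed
      show "\<rho> (c \<odot>\<^bsub>M\<^esub> x \<oplus>\<^bsub>M\<^esub> y) = y" unfolding \<rho>_def
      proof (rule the_equality)
        show "y \<in> ?V \<and> (\<exists>c'\<in>carrier R. c \<odot>\<^bsub>M\<^esub> x \<oplus>\<^bsub>M\<^esub> y = c' \<odot>\<^bsub>M\<^esub> x \<oplus>\<^bsub>M\<^esub> y)"
          using that by auto
      next
        fix y' assume "y' \<in> ?V \<and> (\<exists>c'\<in>carrier R. c \<odot>\<^bsub>M\<^esub> x \<oplus>\<^bsub>M\<^esub> y = c' \<odot>\<^bsub>M\<^esub> x \<oplus>\<^bsub>M\<^esub> y')"
        then obtain c' where "c' \<in> carrier R" "y' \<in> ?V" "c \<odot>\<^bsub>M\<^esub> x \<oplus>\<^bsub>M\<^esub> y = c' \<odot>\<^bsub>M\<^esub> x \<oplus>\<^bsub>M\<^esub> y'"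
          by blast
        then show "y' = y" using uniq[of c c' y y'] that by simp
      qed
    qed
    have addW: "(c \<odot>\<^bsub>M\<^esub> x \<oplus>\<^bsub>M\<^esub> y) \<oplus>\<^bsub>M\<^esub> (c' \<odot>\<^bsub>M\<^esub> x \<oplus>\<^bsub>M\<^esub> y') = (c \<oplus> c') \<odot>\<^bsub>M\<^esub> x \<oplus>\<^bsub>M\<^esub> (y \<oplus>\<^bsub>M\<^esub> y')"
      if "c \<in> carrier R" "c' \<in> carrier R" "y \<in> ?V" "y' \<in> ?V" for c c' y y'
      using that x Vc by (simp add: smult_l_distr M.a_ac subsetD)
    have smW: "r \<odot>\<^bsub>M\<^esub> (c \<odot>\<^bsub>M\<^esub> x \<oplus>\<^bsub>M\<^esub> y) = (r \<otimes> c) \<odot>\<^bsub>M\<^esub> x \<oplus>\<^bsub>M\<^esub> (r \<odot>\<^bsub>M\<^esub> y)"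
      if "r \<in> carrier R" "c \<in> carrier R" "y \<in> ?V" for r c y
      using that x Vc by (simp add: smult_r_distr smult_assoc1 subsetD)
    let ?fs = "\<kappa> # map (\<lambda>g m. g (\<rho> m)) gs"
    show ?thesis
    proof (intro exI[of _ ?fs] conjI ballI impI)
      fix f assume "f \<in> set ?fs"
      then consider "f = \<kappa>" | g where "g \<in> set gs" "f = (\<lambda>m. g (\<rho> m))" by auto
      then show "lin R M ?W f"
      proof cases
        case 1
        show ?thesis unfolding lin_def 1
        proof (intro conjI ballI)
          fix m assume "m \<in> ?W" then show "\<kappa> m \<in> carrier R" using kr by (auto elim!: spn_ConsE)
        next
          fix m m' assume "m \<in> ?W" "m' \<in> ?W"
          then obtain c y c' y' where "c \<in> carrier R" "y \<in> ?V" "m = c \<odot>\<^bsub>M\<^esub> x \<oplus>\<^bsub>M\<^esub> y"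
            "c' \<in> carrier R" "y' \<in> ?V" "m' = c' \<odot>\<^bsub>M\<^esub> x \<oplus>\<^bsub>M\<^esub> y'" by (elim spn_ConsE) blast
          then show "\<kappa> (m \<oplus>\<^bsub>M\<^esub> m') = \<kappa> m \<oplus> \<kappa> m'"
            using addW kr spn_add[OF ys] by simp
        next
          fix r m assume "r \<in> carrier R" "m \<in> ?W"
          then obtain c y where "c \<in> carrier R" "y \<in> ?V" "m = c \<odot>\<^bsub>M\<^esub> x \<oplus>\<^bsub>M\<^esub> y" by (elim spn_ConsE) blast
          then show "\<kappa> (r \<odot>\<^bsub>M\<^esub> m) = r \<otimes> \<kappa> m"
            using smW kr spn_smult[OF ys] \<open>r \<in> carrier R\<close> by simp
        qed
      next
        case 2
        have gl: "lin R M ?V g" using gs_lin 2 by auto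
        show ?thesis unfolding lin_def 2
        proof (intro conjI ballI)
          fix m assume "m \<in> ?W" then show "g (\<rho> m) \<in> carrier R" using kr gl unfolding lin_def by (auto elim!: spn_ConsE)
        next
          fix m m' assume "m \<in> ?W" "m' \<in> ?W"
          then obtain c y c' y' where "c \<in> carrier R" "y \<in> ?V" "m = c \<odot>\<^bsub>M\<^esub> x \<oplus>\<^bsub>M\<^esub> y"
            "c' \<in> carrier R" "y' \<in> ?V" "m' = c' \<odot>\<^bsub>M\<^esub> x \<oplus>\<^bsub>M\<^esub> y'" by (elim spn_ConsE) blast
          then show "g (\<rho> (m \<oplus>\<^bsub>M\<^esub> m')) = g (\<rho> m) \<oplus> g (\<rho> m')"
            using addW kr spn_add[OF ys] gl unfolding lin_def by simp
        next
          fix r m assume "r \<in> carrier R" "m \<in> ?W"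
          then obtain c y where "c \<in> carrier R" "y \<in> ?V" "m = c \<odot>\<^bsub>M\<^esub> x \<oplus>\<^bsub>M\<^esub> y" by (elim spn_ConsE) blast
          then show "g (\<rho> (r \<odot>\<^bsub>M\<^esub> m)) = r \<otimes> g (\<rho> m)"
            using smW kr spn_smult[OF ys] \<open>r \<in> carrier R\<close> gl unfolding lin_def by simp
        qed
      qed
    next
      fix m assume m: "m \<in> ?W" and z: "\<forall>f\<in>set ?fs. f m = \<zero>"
      then obtain c y where cy: "c \<in> carrier R" "y \<in> ?V" "m = c \<odot>\<^bsub>M\<^esub> x \<oplus>\<^bsub>M\<^esub> y" by (elim spn_ConsE) blast
      have "c = \<zero>" using z kr cy by auto
      moreover have "y = \<zero>\<^bsub>M\<^esub>" using z kr cy gs_inj by auto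
      ultimately show "m = \<zero>\<^bsub>M\<^esub>" using cy x by simp
    qed
  qed
qed

end



locale TP = UP_domain R P for R (structure) and P (structure) +
  fixes n :: nat
  assumes n_pos: "1 \<le> n"
begin

abbreviation "Xn \<equiv> up_ring.monom P \<one> n"
abbreviation "J \<equiv> PIdl\<^bsub>P\<^esub> Xn"
abbreviation "A \<equiv> P Quot J"
abbreviation "\<pi> \<equiv> (\<lambda>p. J +>\<^bsub>P\<^esub> p)"
abbreviation "cst \<equiv> (\<lambda>r. \<pi> (up_ring.monom P r 0))"
abbreviation "T \<equiv> \<pi> (up_ring.monom P \<one> 1)"

lemma J_ideal: "ideal J P"
  by (rule P.cgenideal_ideal) simp

lemma A_cring: "cring A"
  by (rule ideal.quotient_is_cring[OF J_ideal P.cring_axioms])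

lemma pi_hom: "ring_hom_cring P A \<pi>"
  using ideal.rcos_ring_hom_cring[OF J_ideal P.cring_axioms] by simp

end

sublocale TP \<subseteq> QA: cring "P Quot (PIdl\<^bsub>P\<^esub> up_ring.monom P \<one> n)"
  by (rule A_cring)

sublocale TP \<subseteq> PI: ring_hom_cring P "P Quot (PIdl\<^bsub>P\<^esub> up_ring.monom P \<one> n)" "(\<lambda>p. (PIdl\<^bsub>P\<^esub> up_ring.monom P \<one> n) +>\<^bsub>P\<^esub> p)"
  by (rule pi_hom)

context TP
begin

lemma coeff_mult_Xn_low:
  assumes q: "q \<in> carrier P" and k: "k < n"
  shows "up_ring.coeff P (q \<otimes>\<^bsub>P\<^esub> Xn) k = \<zero>"
proof -
  have "up_ring.coeff P (q \<otimes>\<^bsub>P\<^esub> Xn) k = (\<Oplus>j\<in>{..k}. up_ring.coeff P q j \<otimes> up_ring.coeff P Xn (k - j))"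
    using q by simp
  also have "\<dots> = (\<Oplus>j\<in>{..k}. \<zero>)"
    by (rule R.finsum_cong') (use q k in auto)
  also have "\<dots> = \<zero>" by simp
  finally show ?thesis .
qed

lemma cP: "carrier P = up R" unfolding P_def UP_def by (simp only: partial_object.simps)
lemma cf: "p \<in> up R \<Longrightarrow> up_ring.coeff P p i = p i" unfolding P_def UP_def by (simp only: up_ring.simps restrict_apply')
lemma ub: "p \<in> up R \<Longrightarrow> \<exists>m. bound \<zero> m p" unfolding up_def by simp
lemma uc: "p \<in> up R \<Longrightarrow> p i \<in> carrier R" unfolding up_def by auto

lemma J_char: "J = {p \<in> carrier P. \<forall>i<n. up_ring.coeff P p i = \<zero>}"
proof
  show "J \<subseteq> {p \<in> carrier P. \<forall>i<n. up_ring.coeff P p i = \<zero>}"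
    using coeff_mult_Xn_low by (auto simp: cgenideal_def)
next
  show "{p \<in> carrier P. \<forall>i<n. up_ring.coeff P p i = \<zero>} \<subseteq> J"
  proof
    fix p assume "p \<in> {p \<in> carrier P. \<forall>i<n. up_ring.coeff P p i = \<zero>}"
    then have p: "p \<in> carrier P" and low: "\<And>i. i < n \<Longrightarrow> up_ring.coeff P p i = \<zero>" by auto
    define q where "q = (\<lambda>i. p (i + n))"
    have pup: "p \<in> up R" using p cP by simp
    then obtain m where bm: "bound \<zero> m p" using ub by blast
    have qup: "q \<in> up R"
    proof (rule mem_upI)
      show "\<And>i. q i \<in> carrier R" using pup uc unfolding q_def by blast
      show "\<exists>m. bound \<zero> m q" using bm unfolding q_def bound_def by (intro exI[of _ m]) auto
    qed
    then have q: "q \<in> carrier P" using cP by simp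
    have "p = q \<otimes>\<^bsub>P\<^esub> Xn"
    proof (rule up_eqI)
      fix k
      show "up_ring.coeff P p k = up_ring.coeff P (q \<otimes>\<^bsub>P\<^esub> Xn) k"
      proof (cases "k < n")
        case True then show ?thesis using low coeff_mult_Xn_low q by simp
      next
        case False
        then obtain j where kj: "k = j + n" by (metis le_add_diff_inverse2 not_less)
        have "up_ring.coeff P (q \<otimes>\<^bsub>P\<^esub> Xn) k = up_ring.coeff P (Xn \<otimes>\<^bsub>P\<^esub> q) (j + n)"
          using q kj by (simp add: P.m_comm)
        also have "\<dots> = \<one> \<otimes> up_ring.coeff P q j" by (rule coeff_monom_mult) (use q in auto)
        also have "\<dots> = q j" using q cf[OF qup] uc[OF qup] by simp
        also have "\<dots> = up_ring.coeff P p k" using cf[OF pup] kj q_def by simp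
        finally show ?thesis by simp
      qed
    qed (use p q in auto)
    then show "p \<in> J" using q by (auto simp: cgenideal_def)
  qed
qed

lemma zero_A: "\<zero>\<^bsub>A\<^esub> = J" unfolding FactRing_def by (simp only: ring.simps)

lemma pi_zero_iff:
  assumes p: "p \<in> carrier P" shows "\<pi> p = \<zero>\<^bsub>A\<^esub> \<longleftrightarrow> p \<in> J"
proof
  assume "\<pi> p = \<zero>\<^bsub>A\<^esub>"
  then have "\<pi> p = J" by (simp only: zero_A)
  then show "p \<in> J" by (rule ideal.rcos_const_imp_mem[OF J_ideal p])
next
  assume "p \<in> J"
  then have "\<pi> p = J" by (rule P.a_rcos_zero[OF J_ideal])
  then show "\<pi> p = \<zero>\<^bsub>A\<^esub>" by (simp only: zero_A)
qed

lemma carrier_A0: "carrier A = a_rcosets\<^bsub>P\<^esub> J" unfolding FactRing_def by (simp only: partial_object.simps)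

lemma carrier_A: "carrier A = \<pi> ` carrier P"
  unfolding carrier_A0 A_RCOSETS_def RCOSETS_def a_r_coset_def by auto
lemma cst_closed: "r \<in> carrier R \<Longrightarrow> cst r \<in> carrier A"
  by (rule PI.hom_closed) simp

lemma T_closed: "T \<in> carrier A"
  by (rule PI.hom_closed) simp

lemma cst_add: "a \<in> carrier R \<Longrightarrow> b \<in> carrier R \<Longrightarrow> cst (a \<oplus> b) = cst a \<oplus>\<^bsub>A\<^esub> cst b"
  by (simp add: PI.hom_add)

lemma cst_mult: "a \<in> carrier R \<Longrightarrow> b \<in> carrier R \<Longrightarrow> cst (a \<otimes> b) = cst a \<otimes>\<^bsub>A\<^esub> cst b"
  using monom_mult[of a b 0 0] by (simp add: PI.hom_mult)

lemma cst_one: "cst \<one> = \<one>\<^bsub>A\<^esub>"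
  by simp

lemma cst_zero: "cst \<zero> = \<zero>\<^bsub>A\<^esub>"
  by simp

lemma pi_monom: "c \<in> carrier R \<Longrightarrow> \<pi> (up_ring.monom P c i) = cst c \<otimes>\<^bsub>A\<^esub> T [^]\<^bsub>A\<^esub> i"
proof -
  assume c: "c \<in> carrier R"
  have "up_ring.monom P c i = up_ring.monom P c 0 \<otimes>\<^bsub>P\<^esub> up_ring.monom P \<one> i"
    using monom_mult[of c \<one> 0 i] c by simp
  moreover have "up_ring.monom P \<one> i = up_ring.monom P \<one> 1 [^]\<^bsub>P\<^esub> i"
    using monom_pow[of \<one> 1 i] by simp
  ultimately show ?thesis using c by (simp add: PI.hom_mult)
qed

lemma pi_rep: "p \<in> carrier P \<Longrightarrow> \<pi> p = (\<Oplus>\<^bsub>A\<^esub> i\<in>{..deg R p}. cst (up_ring.coeff P p i) \<otimes>\<^bsub>A\<^esub> T [^]\<^bsub>A\<^esub> i)"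
proof -
  assume p: "p \<in> carrier P"
  have "\<pi> p = \<pi> (\<Oplus>\<^bsub>P\<^esub> i\<in>{..deg R p}. up_ring.monom P (up_ring.coeff P p i) i)"
    by (simp only: up_repr[OF p])
  also have "\<dots> = finsum A (\<pi> \<circ> (\<lambda>i. up_ring.monom P (up_ring.coeff P p i) i)) {..deg R p}"
    by (rule PI.hom_finsum) (use p in auto)
  also have "\<dots> = (\<Oplus>\<^bsub>A\<^esub> i\<in>{..deg R p}. \<pi> (up_ring.monom P (up_ring.coeff P p i) i))"
    by (simp only: comp_def)
  also have "\<dots> = (\<Oplus>\<^bsub>A\<^esub> i\<in>{..deg R p}. cst (up_ring.coeff P p i) \<otimes>\<^bsub>A\<^esub> T [^]\<^bsub>A\<^esub> i)"
  proof (rule QA.finsum_cong'[OF refl])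
    show "(\<lambda>i. cst (up_ring.coeff P p i) \<otimes>\<^bsub>A\<^esub> T [^]\<^bsub>A\<^esub> i) \<in> {..deg R p} \<rightarrow> carrier A"
      by (intro Pi_I QA.m_closed cst_closed T_closed QA.nat_pow_closed coeff_closed p)
    show "\<And>i. i \<in> {..deg R p} \<Longrightarrow> \<pi> (up_ring.monom P (up_ring.coeff P p i) i) = cst (up_ring.coeff P p i) \<otimes>\<^bsub>A\<^esub> T [^]\<^bsub>A\<^esub> i"
      by (rule pi_monom, rule coeff_closed[OF p])
  qed
  finally show ?thesis .
qed

lemma A_induct:
  assumes Q0: "Q \<zero>\<^bsub>A\<^esub>"
    and Qadd: "\<And>a b. a \<in> carrier A \<Longrightarrow> b \<in> carrier A \<Longrightarrow> Q a \<Longrightarrow> Q b \<Longrightarrow> Q (a \<oplus>\<^bsub>A\<^esub> b)"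
    and Qm: "\<And>c (i::nat). c \<in> carrier R \<Longrightarrow> Q (cst c \<otimes>\<^bsub>A\<^esub> T [^]\<^bsub>A\<^esub> i)"
    and a: "a \<in> carrier A"
  shows "Q a"
proof -
  have gen: "Q (\<Oplus>\<^bsub>A\<^esub> i\<in>F. cst (g i) \<otimes>\<^bsub>A\<^esub> T [^]\<^bsub>A\<^esub> i)"
    if "finite F" "g \<in> F \<rightarrow> carrier R" for F :: "nat set" and g
    using that
  proof (induction F rule: finite_induct)
    case empty then show ?case using Q0 by simp
  next
    case (insert x F)
    have cl: "(\<lambda>i. cst (g i) \<otimes>\<^bsub>A\<^esub> T [^]\<^bsub>A\<^esub> i) \<in> insert x F \<rightarrow> carrier A"
      by (intro Pi_I QA.m_closed cst_closed T_closed QA.nat_pow_closed) (use insert.prems in \<open>auto simp: Pi_iff\<close>)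
    have eq: "(\<Oplus>\<^bsub>A\<^esub> i\<in>insert x F. cst (g i) \<otimes>\<^bsub>A\<^esub> T [^]\<^bsub>A\<^esub> i)
       = cst (g x) \<otimes>\<^bsub>A\<^esub> T [^]\<^bsub>A\<^esub> x \<oplus>\<^bsub>A\<^esub> (\<Oplus>\<^bsub>A\<^esub> i\<in>F. cst (g i) \<otimes>\<^bsub>A\<^esub> T [^]\<^bsub>A\<^esub> i)"
      by (rule QA.finsum_insert) (use insert.hyps cl in \<open>auto simp: Pi_iff\<close>)
    have q1: "Q (\<Oplus>\<^bsub>A\<^esub> i\<in>F. cst (g i) \<otimes>\<^bsub>A\<^esub> T [^]\<^bsub>A\<^esub> i)" by (rule insert.IH) (use insert.prems in \<open>auto simp: Pi_iff\<close>)
    have c1: "(\<Oplus>\<^bsub>A\<^esub> i\<in>F. cst (g i) \<otimes>\<^bsub>A\<^esub> T [^]\<^bsub>A\<^esub> i) \<in> carrier A"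
      by (rule QA.finsum_closed) (use cl in \<open>auto simp: Pi_iff\<close>)
    have c2: "cst (g x) \<otimes>\<^bsub>A\<^esub> T [^]\<^bsub>A\<^esub> x \<in> carrier A" using cl by (simp add: Pi_iff)
    have q2: "Q (cst (g x) \<otimes>\<^bsub>A\<^esub> T [^]\<^bsub>A\<^esub> x)" by (rule Qm) (use insert.prems in auto)
    show ?case unfolding eq by (rule Qadd[OF c2 c1 q2 q1])
  qed
  from a obtain p where p: "p \<in> carrier P" "a = \<pi> p" using carrier_A by auto
  have e: "a = (\<Oplus>\<^bsub>A\<^esub> i\<in>{..deg R p}. cst (up_ring.coeff P p i) \<otimes>\<^bsub>A\<^esub> T [^]\<^bsub>A\<^esub> i)"
    using p(2) pi_rep[OF p(1)] by (rule trans)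
  have "Q (\<Oplus>\<^bsub>A\<^esub> i\<in>{..deg R p}. cst (up_ring.coeff P p i) \<otimes>\<^bsub>A\<^esub> T [^]\<^bsub>A\<^esub> i)"
    by (rule gen) (use p(1) in auto)
  then show ?thesis by (simp only: e)
qed

lemma T_pow_n: "T [^]\<^bsub>A\<^esub> n = \<zero>\<^bsub>A\<^esub>"
proof -
  have "T [^]\<^bsub>A\<^esub> n = \<pi> (up_ring.monom P \<one> 1 [^]\<^bsub>P\<^esub> n)" by simp
  also have "up_ring.monom P \<one> 1 [^]\<^bsub>P\<^esub> n = Xn" using monom_pow[of \<one> 1 n] by simp
  also have "\<pi> Xn = \<zero>\<^bsub>A\<^esub>" using pi_zero_iff[of Xn] P.cgenideal_self[of Xn] by simp
  finally show ?thesis .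
qed

lemma cst_nzd: assumes r: "r \<in> carrier R" "r \<noteq> \<zero>" shows "cst r \<in> non_zero_divisors A"
  unfolding non_zero_divisors_def
proof (intro CollectI conjI ballI impI)
  show "cst r \<in> carrier A" using cst_closed r by simp
  fix v assume v: "v \<in> carrier A" and z: "cst r \<otimes>\<^bsub>A\<^esub> v = \<zero>\<^bsub>A\<^esub>"
  from v obtain p where p: "p \<in> carrier P" "v = \<pi> p" using carrier_A by auto
  have "\<pi> (up_ring.monom P r 0 \<otimes>\<^bsub>P\<^esub> p) = cst r \<otimes>\<^bsub>A\<^esub> \<pi> p"
    by (rule PI.hom_mult) (use p r in auto)
  then have "cst r \<otimes>\<^bsub>A\<^esub> v = \<pi> (r \<odot>\<^bsub>P\<^esub> p)"
    using p r monom_mult_is_smult[of r p] by simp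
  then have "r \<odot>\<^bsub>P\<^esub> p \<in> J" using z pi_zero_iff[of "r \<odot>\<^bsub>P\<^esub> p"] p r by simp
  then have "\<forall>i<n. r \<otimes> up_ring.coeff P p i = \<zero>" using J_char p r by auto
  then have "\<forall>i<n. up_ring.coeff P p i = \<zero>" using r p by (simp add: R.integral_iff)
  then have "p \<in> J" using J_char p by auto
  then show "v = \<zero>\<^bsub>A\<^esub>" using pi_zero_iff p by simp
qed

end



locale TPM = TP R P n for R (structure) and P (structure) and n +
  fixes M :: "((nat \<Rightarrow> 'a) set, 'm, 'x) module_scheme" (structure)
  assumes M_mod: "module (P Quot (PIdl\<^bsub>P\<^esub> up_ring.monom P \<one>\<^bsub>R\<^esub> n)) M"

sublocale TPM \<subseteq> MA: module "P Quot (PIdl\<^bsub>P\<^esub> up_ring.monom P \<one>\<^bsub>R\<^esub> n)" M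
  by (rule M_mod)

context TPM
begin

abbreviation "MR \<equiv> \<lparr>carrier = carrier M, monoid.mult = monoid.mult M, one = one M,
   ring.zero = ring.zero M, ring.add = ring.add M, module.smult = (\<lambda>r x. cst r \<odot>\<^bsub>M\<^esub> x)\<rparr>"

lemma MR_module: "module R MR"
proof (rule moduleI)
  show "cring R" by (rule R.cring_axioms)
  show "abelian_group MR"
  proof (rule abelian_groupI)
    show "\<And>x y. x \<in> carrier MR \<Longrightarrow> y \<in> carrier MR \<Longrightarrow> x \<oplus>\<^bsub>MR\<^esub> y \<in> carrier MR" by simp
    show "\<zero>\<^bsub>MR\<^esub> \<in> carrier MR" by simp
    show "\<And>x y z. x \<in> carrier MR \<Longrightarrow> y \<in> carrier MR \<Longrightarrow> z \<in> carrier MR \<Longrightarrow>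
      x \<oplus>\<^bsub>MR\<^esub> y \<oplus>\<^bsub>MR\<^esub> z = x \<oplus>\<^bsub>MR\<^esub> (y \<oplus>\<^bsub>MR\<^esub> z)" by (simp add: MA.a_assoc)
    show "\<And>x y. x \<in> carrier MR \<Longrightarrow> y \<in> carrier MR \<Longrightarrow> x \<oplus>\<^bsub>MR\<^esub> y = y \<oplus>\<^bsub>MR\<^esub> x" by (simp add: MA.a_comm)
    show "\<And>x. x \<in> carrier MR \<Longrightarrow> \<zero>\<^bsub>MR\<^esub> \<oplus>\<^bsub>MR\<^esub> x = x" by simp
    show "\<And>x. x \<in> carrier MR \<Longrightarrow> \<exists>y\<in>carrier MR. y \<oplus>\<^bsub>MR\<^esub> x = \<zero>\<^bsub>MR\<^esub>"
    proof -
      fix x assume "x \<in> carrier MR"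
      then have "\<ominus>\<^bsub>M\<^esub> x \<in> carrier MR \<and> \<ominus>\<^bsub>M\<^esub> x \<oplus>\<^bsub>MR\<^esub> x = \<zero>\<^bsub>MR\<^esub>" using MA.l_neg by simp
      then show "\<exists>y\<in>carrier MR. y \<oplus>\<^bsub>MR\<^esub> x = \<zero>\<^bsub>MR\<^esub>" by blast
    qed
  qed
  show "\<And>a x. a \<in> carrier R \<Longrightarrow> x \<in> carrier MR \<Longrightarrow> a \<odot>\<^bsub>MR\<^esub> x \<in> carrier MR"
    using cst_closed by simp
  show "\<And>a b x. a \<in> carrier R \<Longrightarrow> b \<in> carrier R \<Longrightarrow> x \<in> carrier MR \<Longrightarrow>
      (a \<oplus> b) \<odot>\<^bsub>MR\<^esub> x = a \<odot>\<^bsub>MR\<^esub> x \<oplus>\<^bsub>MR\<^esub> b \<odot>\<^bsub>MR\<^esub> x"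
    using cst_closed cst_add MA.smult_l_distr by simp
  show "\<And>a x y. a \<in> carrier R \<Longrightarrow> x \<in> carrier MR \<Longrightarrow> y \<in> carrier MR \<Longrightarrow>
      a \<odot>\<^bsub>MR\<^esub> (x \<oplus>\<^bsub>MR\<^esub> y) = a \<odot>\<^bsub>MR\<^esub> x \<oplus>\<^bsub>MR\<^esub> a \<odot>\<^bsub>MR\<^esub> y"
    using cst_closed MA.smult_r_distr by simp
  show "\<And>a b x. a \<in> carrier R \<Longrightarrow> b \<in> carrier R \<Longrightarrow> x \<in> carrier MR \<Longrightarrow>
      (a \<otimes> b) \<odot>\<^bsub>MR\<^esub> x = a \<odot>\<^bsub>MR\<^esub> (b \<odot>\<^bsub>MR\<^esub> x)"
    using cst_closed cst_mult MA.smult_assoc1 by simp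
  show "\<And>x. x \<in> carrier MR \<Longrightarrow> \<one> \<odot>\<^bsub>MR\<^esub> x = x"
    using cst_one by simp
qed

lemma R_tf:
  assumes tf: "torsion_free A M"
  shows "\<And>r x. r \<in> carrier R \<Longrightarrow> x \<in> carrier MR \<Longrightarrow> r \<noteq> \<zero> \<Longrightarrow> r \<odot>\<^bsub>MR\<^esub> x = \<zero>\<^bsub>MR\<^esub> \<Longrightarrow> x = \<zero>\<^bsub>MR\<^esub>"
proof -
  fix r x assume r: "r \<in> carrier R" "r \<noteq> \<zero>" and x: "x \<in> carrier MR" and z: "r \<odot>\<^bsub>MR\<^esub> x = \<zero>\<^bsub>MR\<^esub>"
  have "cst r \<in> non_zero_divisors A" using cst_nzd r by simp
  then have "x \<in> torsion A M" using x z unfolding torsion_def by auto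
  then show "x = \<zero>\<^bsub>MR\<^esub>" using tf unfolding torsion_free_def by simp
qed

lemma finsum_in_sub:
  assumes V: "V \<subseteq> carrier M" "\<zero>\<^bsub>M\<^esub> \<in> V" "\<And>u v. u \<in> V \<Longrightarrow> v \<in> V \<Longrightarrow> u \<oplus>\<^bsub>M\<^esub> v \<in> V"
  shows "finite F \<Longrightarrow> f \<in> F \<rightarrow> V \<Longrightarrow> finsum M f F \<in> V"
proof (induction F rule: finite_induct)
  case empty then show ?case using V by simp
next
  case (insert x F)
  have fc: "f \<in> insert x F \<rightarrow> carrier M" using insert.prems V(1) by (auto simp: Pi_iff)
  have "finsum M f (insert x F) = f x \<oplus>\<^bsub>M\<^esub> finsum M f F"
    by (rule MA.finsum_insert) (use insert.hyps fc in \<open>auto simp: Pi_iff\<close>)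
  moreover have "finsum M f F \<in> V" by (rule insert.IH) (use insert.prems in \<open>auto simp: Pi_iff\<close>)
  moreover have "f x \<in> V" using insert.prems by (auto simp: Pi_iff)
  ultimately show ?case using V(3) by simp
qed

lemma spans:
  assumes fg: "finitely_generated_module A M"
  shows "\<exists>G. set G \<subseteq> carrier M \<and> spn R MR G = carrier M"
proof -
  obtain S where S: "finite S" "S \<subseteq> carrier M"
    and gen: "\<forall>x \<in> carrier M. \<exists>c \<in> S \<rightarrow> carrier A. x = (\<Oplus>\<^bsub>M\<^esub> s \<in> S. c s \<odot>\<^bsub>M\<^esub> s)"
    using fg unfolding finitely_generated_module_def by blast
  obtain sl where sl: "set sl = S" using S(1) finite_list by blast
  define G where "G = concat (map (\<lambda>s. map (\<lambda>i. T [^]\<^bsub>A\<^esub> i \<odot>\<^bsub>M\<^esub> s) [0..<n]) sl)"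
  have Gc: "set G \<subseteq> carrier M" unfolding G_def using sl S T_closed by (auto intro!: MA.smult_closed QA.nat_pow_closed)
  let ?V = "spn R MR G"
  have Vc: "?V \<subseteq> carrier M" using module.spn_carrier[OF MR_module, of G] Gc by simp
  have V0: "\<zero>\<^bsub>M\<^esub> \<in> ?V" using module.spn_zero[OF MR_module, of G] Gc by simp
  have Vadd: "\<And>u v. u \<in> ?V \<Longrightarrow> v \<in> ?V \<Longrightarrow> u \<oplus>\<^bsub>M\<^esub> v \<in> ?V"
    using module.spn_add[OF MR_module, of G] Gc by simp
  have Vsm: "\<And>r u. r \<in> carrier R \<Longrightarrow> u \<in> ?V \<Longrightarrow> cst r \<odot>\<^bsub>M\<^esub> u \<in> ?V"
    using module.spn_smult[OF MR_module, of G] Gc by simp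
  have Vmem: "\<And>x. x \<in> set G \<Longrightarrow> x \<in> ?V"
    using module.spn_mem[OF MR_module, of G] Gc by simp
  have Tpow: "T [^]\<^bsub>A\<^esub> i \<odot>\<^bsub>M\<^esub> s \<in> ?V" if s: "s \<in> S" for s and i :: nat
  proof (cases "i < n")
    case True
    then have "T [^]\<^bsub>A\<^esub> i \<odot>\<^bsub>M\<^esub> s \<in> set G" unfolding G_def using s sl by (auto intro!: bexI[of _ s])
    then show ?thesis using Vmem by simp
  next
    case False
    then have "T [^]\<^bsub>A\<^esub> i = T [^]\<^bsub>A\<^esub> n \<otimes>\<^bsub>A\<^esub> T [^]\<^bsub>A\<^esub> (i - n)"
      using QA.nat_pow_mult[OF T_closed, of n "i - n"] by simp
    also have "\<dots> = \<zero>\<^bsub>A\<^esub>" using T_pow_n T_closed by simp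
    finally show ?thesis using V0 s S MA.smult_l_null[of s] by auto
  qed
  have As: "a \<odot>\<^bsub>M\<^esub> s \<in> ?V" if a: "a \<in> carrier A" and s: "s \<in> S" for a s
  proof -
    have sc: "s \<in> carrier M" using s S by auto
    show ?thesis
    proof (rule A_induct[where Q = "\<lambda>a. a \<odot>\<^bsub>M\<^esub> s \<in> ?V"])
      show "\<zero>\<^bsub>A\<^esub> \<odot>\<^bsub>M\<^esub> s \<in> ?V" using V0 sc by simp
    next
      fix a b assume "a \<in> carrier A" "b \<in> carrier A" "a \<odot>\<^bsub>M\<^esub> s \<in> ?V" "b \<odot>\<^bsub>M\<^esub> s \<in> ?V"
      then show "(a \<oplus>\<^bsub>A\<^esub> b) \<odot>\<^bsub>M\<^esub> s \<in> ?V" using MA.smult_l_distr sc Vadd by simp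
    next
      fix c and i :: nat assume c: "c \<in> carrier R"
      have "(cst c \<otimes>\<^bsub>A\<^esub> T [^]\<^bsub>A\<^esub> i) \<odot>\<^bsub>M\<^esub> s = cst c \<odot>\<^bsub>M\<^esub> (T [^]\<^bsub>A\<^esub> i \<odot>\<^bsub>M\<^esub> s)"
        by (rule MA.smult_assoc1) (use c sc cst_closed T_closed in auto)
      then show "(cst c \<otimes>\<^bsub>A\<^esub> T [^]\<^bsub>A\<^esub> i) \<odot>\<^bsub>M\<^esub> s \<in> ?V" using Vsm[OF c Tpow[OF s]] by simp
    qed (rule a)
  qed
  have "carrier M \<subseteq> ?V"
  proof
    fix x assume "x \<in> carrier M"
    then obtain c where c: "c \<in> S \<rightarrow> carrier A" "x = (\<Oplus>\<^bsub>M\<^esub> s \<in> S. c s \<odot>\<^bsub>M\<^esub> s)" using gen by blast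
    have "(\<Oplus>\<^bsub>M\<^esub> s \<in> S. c s \<odot>\<^bsub>M\<^esub> s) \<in> ?V"
      by (rule finsum_in_sub[OF Vc V0 Vadd S(1)]) (use c As in \<open>auto simp: Pi_iff\<close>)
    then show "x \<in> ?V" using c by simp
  qed
  then show ?thesis using Vc Gc by blast
qed

end



context TPM
begin

definition phi :: "('m \<Rightarrow> 'a) \<Rightarrow> 'm \<Rightarrow> (nat \<Rightarrow> 'a) set" where
  "phi f m = (\<Oplus>\<^bsub>A\<^esub> i\<in>{..n - 1}. cst (f (T [^]\<^bsub>A\<^esub> (n - 1 - i) \<odot>\<^bsub>M\<^esub> m)) \<otimes>\<^bsub>A\<^esub> T [^]\<^bsub>A\<^esub> i)"

lemma Tm_closed: "m \<in> carrier M \<Longrightarrow> T [^]\<^bsub>A\<^esub> (j::nat) \<odot>\<^bsub>M\<^esub> m \<in> carrier M"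
  by (intro MA.smult_closed QA.nat_pow_closed T_closed)

lemma term_closed: "r \<in> carrier R \<Longrightarrow> cst r \<otimes>\<^bsub>A\<^esub> T [^]\<^bsub>A\<^esub> (i::nat) \<in> carrier A"
  by (intro QA.m_closed cst_closed QA.nat_pow_closed T_closed)

context
  fixes f :: "'m \<Rightarrow> 'a"
  assumes flin: "lin R MR (carrier M) f"
begin

lemma fc: "m \<in> carrier M \<Longrightarrow> f m \<in> carrier R"
  using flin unfolding lin_def by simp

lemma fadd: "m \<in> carrier M \<Longrightarrow> m' \<in> carrier M \<Longrightarrow> f (m \<oplus>\<^bsub>M\<^esub> m') = f m \<oplus> f m'"
  using flin unfolding lin_def by simp

lemma fsm: "r \<in> carrier R \<Longrightarrow> m \<in> carrier M \<Longrightarrow> f (cst r \<odot>\<^bsub>M\<^esub> m) = r \<otimes> f m"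
  using flin unfolding lin_def by simp

lemma f0: "f \<zero>\<^bsub>M\<^esub> = \<zero>"
proof -
  have "f (cst \<zero> \<odot>\<^bsub>M\<^esub> \<zero>\<^bsub>M\<^esub>) = \<zero> \<otimes> f \<zero>\<^bsub>M\<^esub>" by (rule fsm) auto
  moreover have "cst \<zero> \<odot>\<^bsub>M\<^esub> \<zero>\<^bsub>M\<^esub> = \<zero>\<^bsub>M\<^esub>" using cst_zero by simp
  ultimately show ?thesis using fc[of "\<zero>\<^bsub>M\<^esub>"] by simp
qed

lemma phi_pi: "m \<in> carrier M \<Longrightarrow> (\<lambda>i. cst (f (T [^]\<^bsub>A\<^esub> (n - 1 - i) \<odot>\<^bsub>M\<^esub> m)) \<otimes>\<^bsub>A\<^esub> T [^]\<^bsub>A\<^esub> i) \<in> F \<rightarrow> carrier A"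
  by (intro Pi_I term_closed fc Tm_closed)

lemma phi_closed: "m \<in> carrier M \<Longrightarrow> phi f m \<in> carrier A"
  unfolding phi_def by (intro QA.finsum_closed Pi_I term_closed fc Tm_closed)

lemma phi_add: assumes m: "m \<in> carrier M" "m' \<in> carrier M"
  shows "phi f (m \<oplus>\<^bsub>M\<^esub> m') = phi f m \<oplus>\<^bsub>A\<^esub> phi f m'"
proof -
  have "phi f (m \<oplus>\<^bsub>M\<^esub> m') = (\<Oplus>\<^bsub>A\<^esub> i\<in>{..n - 1}.
      cst (f (T [^]\<^bsub>A\<^esub> (n - 1 - i) \<odot>\<^bsub>M\<^esub> m)) \<otimes>\<^bsub>A\<^esub> T [^]\<^bsub>A\<^esub> i \<oplus>\<^bsub>A\<^esub>
      cst (f (T [^]\<^bsub>A\<^esub> (n - 1 - i) \<odot>\<^bsub>M\<^esub> m')) \<otimes>\<^bsub>A\<^esub> T [^]\<^bsub>A\<^esub> i)"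
    unfolding phi_def
  proof (rule QA.finsum_cong'[OF refl])
    show "(\<lambda>i. cst (f (T [^]\<^bsub>A\<^esub> (n - 1 - i) \<odot>\<^bsub>M\<^esub> m)) \<otimes>\<^bsub>A\<^esub> T [^]\<^bsub>A\<^esub> i \<oplus>\<^bsub>A\<^esub>
      cst (f (T [^]\<^bsub>A\<^esub> (n - 1 - i) \<odot>\<^bsub>M\<^esub> m')) \<otimes>\<^bsub>A\<^esub> T [^]\<^bsub>A\<^esub> i) \<in> {..n-1} \<rightarrow> carrier A"
      using m by (intro Pi_I QA.a_closed term_closed fc Tm_closed)
    fix i
    have e1: "T [^]\<^bsub>A\<^esub> (n - 1 - i) \<odot>\<^bsub>M\<^esub> (m \<oplus>\<^bsub>M\<^esub> m') = T [^]\<^bsub>A\<^esub> (n - 1 - i) \<odot>\<^bsub>M\<^esub> m \<oplus>\<^bsub>M\<^esub> T [^]\<^bsub>A\<^esub> (n - 1 - i) \<odot>\<^bsub>M\<^esub> m'"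
      by (rule MA.smult_r_distr) (use m T_closed in auto)
    show "cst (f (T [^]\<^bsub>A\<^esub> (n - 1 - i) \<odot>\<^bsub>M\<^esub> (m \<oplus>\<^bsub>M\<^esub> m'))) \<otimes>\<^bsub>A\<^esub> T [^]\<^bsub>A\<^esub> i =
      cst (f (T [^]\<^bsub>A\<^esub> (n - 1 - i) \<odot>\<^bsub>M\<^esub> m)) \<otimes>\<^bsub>A\<^esub> T [^]\<^bsub>A\<^esub> i \<oplus>\<^bsub>A\<^esub>
      cst (f (T [^]\<^bsub>A\<^esub> (n - 1 - i) \<odot>\<^bsub>M\<^esub> m')) \<otimes>\<^bsub>A\<^esub> T [^]\<^bsub>A\<^esub> i"
      unfolding e1 using m by (simp add: fadd Tm_closed fc cst_add cst_closed QA.l_distr T_closed)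
  qed
  also have "\<dots> = phi f m \<oplus>\<^bsub>A\<^esub> phi f m'"
    unfolding phi_def
    by (rule QA.finsum_addf[OF phi_pi phi_pi]) (rule m)+
  finally show ?thesis .
qed

lemma phi_cst: assumes r: "r \<in> carrier R" and m: "m \<in> carrier M"
  shows "phi f (cst r \<odot>\<^bsub>M\<^esub> m) = cst r \<otimes>\<^bsub>A\<^esub> phi f m"
proof -
  have "phi f (cst r \<odot>\<^bsub>M\<^esub> m) = (\<Oplus>\<^bsub>A\<^esub> i\<in>{..n - 1}. cst r \<otimes>\<^bsub>A\<^esub>
      (cst (f (T [^]\<^bsub>A\<^esub> (n - 1 - i) \<odot>\<^bsub>M\<^esub> m)) \<otimes>\<^bsub>A\<^esub> T [^]\<^bsub>A\<^esub> i))"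
    unfolding phi_def
  proof (rule QA.finsum_cong'[OF refl])
    show "(\<lambda>i. cst r \<otimes>\<^bsub>A\<^esub> (cst (f (T [^]\<^bsub>A\<^esub> (n - 1 - i) \<odot>\<^bsub>M\<^esub> m)) \<otimes>\<^bsub>A\<^esub> T [^]\<^bsub>A\<^esub> i)) \<in> {..n-1} \<rightarrow> carrier A"
      using m r by (intro Pi_I QA.m_closed cst_closed term_closed fc Tm_closed QA.nat_pow_closed T_closed)
    fix i
    let ?j = "n - 1 - i"
    have tj: "T [^]\<^bsub>A\<^esub> ?j \<in> carrier A" by (intro QA.nat_pow_closed T_closed)
    have "T [^]\<^bsub>A\<^esub> ?j \<odot>\<^bsub>M\<^esub> (cst r \<odot>\<^bsub>M\<^esub> m) = (T [^]\<^bsub>A\<^esub> ?j \<otimes>\<^bsub>A\<^esub> cst r) \<odot>\<^bsub>M\<^esub> m"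
      using MA.smult_assoc1[OF tj cst_closed[OF r] m] by simp
    also have "\<dots> = (cst r \<otimes>\<^bsub>A\<^esub> T [^]\<^bsub>A\<^esub> ?j) \<odot>\<^bsub>M\<^esub> m"
      using QA.m_comm[OF tj cst_closed[OF r]] by simp
    also have "\<dots> = cst r \<odot>\<^bsub>M\<^esub> (T [^]\<^bsub>A\<^esub> ?j \<odot>\<^bsub>M\<^esub> m)"
      using MA.smult_assoc1[OF cst_closed[OF r] tj m] by simp
    finally have e1: "T [^]\<^bsub>A\<^esub> ?j \<odot>\<^bsub>M\<^esub> (cst r \<odot>\<^bsub>M\<^esub> m) = cst r \<odot>\<^bsub>M\<^esub> (T [^]\<^bsub>A\<^esub> ?j \<odot>\<^bsub>M\<^esub> m)" .
    have y: "T [^]\<^bsub>A\<^esub> ?j \<odot>\<^bsub>M\<^esub> m \<in> carrier M" using m by (rule Tm_closed)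
    have fy: "f (T [^]\<^bsub>A\<^esub> ?j \<odot>\<^bsub>M\<^esub> m) \<in> carrier R" using y by (rule fc)
    show "cst (f (T [^]\<^bsub>A\<^esub> ?j \<odot>\<^bsub>M\<^esub> (cst r \<odot>\<^bsub>M\<^esub> m))) \<otimes>\<^bsub>A\<^esub> T [^]\<^bsub>A\<^esub> i =
      cst r \<otimes>\<^bsub>A\<^esub> (cst (f (T [^]\<^bsub>A\<^esub> ?j \<odot>\<^bsub>M\<^esub> m)) \<otimes>\<^bsub>A\<^esub> T [^]\<^bsub>A\<^esub> i)"
      unfolding e1 fsm[OF r y] cst_mult[OF r fy]
      by (intro QA.m_assoc cst_closed r fy QA.nat_pow_closed T_closed)
  qed
  also have "\<dots> = cst r \<otimes>\<^bsub>A\<^esub> phi f m"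
    unfolding phi_def by (rule QA.finsum_rdistr[symmetric, OF finite_atMost cst_closed[OF r] phi_pi[OF m]])
  finally show ?thesis .
qed

lemma phi_zero0: "phi f \<zero>\<^bsub>M\<^esub> = \<zero>\<^bsub>A\<^esub>"
proof -
  have z: "\<zero>\<^bsub>M\<^esub> \<in> carrier M" by simp
  have pc: "phi f \<zero>\<^bsub>M\<^esub> \<in> carrier A" using phi_closed[OF z] .
  have "phi f \<zero>\<^bsub>M\<^esub> \<oplus>\<^bsub>A\<^esub> phi f \<zero>\<^bsub>M\<^esub> = phi f \<zero>\<^bsub>M\<^esub> \<oplus>\<^bsub>A\<^esub> \<zero>\<^bsub>A\<^esub>"
    using phi_add[OF z z] pc by simp
  then show ?thesis using QA.ag_lc[OF pc pc QA.zero_closed] by simp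
qed

lemma phi_T: assumes m: "m \<in> carrier M"
  shows "phi f (T \<odot>\<^bsub>M\<^esub> m) = T \<otimes>\<^bsub>A\<^esub> phi f m"
proof -
  obtain k where nk: "n = Suc k" using n_pos by (cases n) auto
  have nk1: "n - 1 = k" using nk by simp
  define g where "g i = cst (f (T [^]\<^bsub>A\<^esub> (n - i) \<odot>\<^bsub>M\<^esub> m)) \<otimes>\<^bsub>A\<^esub> T [^]\<^bsub>A\<^esub> i" for i
  have gc: "\<And>i. g i \<in> carrier A" unfolding g_def by (intro term_closed fc Tm_closed m)
  have gpi: "g \<in> F \<rightarrow> carrier A" for F using gc by simp
  have gpi2: "(\<lambda>i. g (Suc i)) \<in> F \<rightarrow> carrier A" for F using gc by simp
  have tc: "T [^]\<^bsub>A\<^esub> (j::nat) \<in> carrier A" for j by (intro QA.nat_pow_closed T_closed)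
  have "phi f (T \<odot>\<^bsub>M\<^esub> m) = (\<Oplus>\<^bsub>A\<^esub> i\<in>{..k}. g i)"
    unfolding phi_def unfolding nk1
  proof (rule QA.finsum_cong'[OF refl gpi])
    fix i assume "i \<in> {..k}"
    then have ik: "Suc (k - i) = n - i" using nk by auto
    have "T [^]\<^bsub>A\<^esub> (k - i) \<odot>\<^bsub>M\<^esub> (T \<odot>\<^bsub>M\<^esub> m) = (T [^]\<^bsub>A\<^esub> (k - i) \<otimes>\<^bsub>A\<^esub> T) \<odot>\<^bsub>M\<^esub> m"
      using MA.smult_assoc1[OF tc T_closed m] by simp
    also have "\<dots> = T [^]\<^bsub>A\<^esub> (n - i) \<odot>\<^bsub>M\<^esub> m"
      using QA.nat_pow_Suc[of T "k - i"] by (simp only: ik)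
    finally show "cst (f (T [^]\<^bsub>A\<^esub> (k - i) \<odot>\<^bsub>M\<^esub> (T \<odot>\<^bsub>M\<^esub> m))) \<otimes>\<^bsub>A\<^esub> T [^]\<^bsub>A\<^esub> i = g i"
      unfolding g_def by simp
  qed
  also have "\<dots> = (\<Oplus>\<^bsub>A\<^esub> i\<in>{..Suc k}. g i)"
  proof -
    have "T [^]\<^bsub>A\<^esub> Suc k = \<zero>\<^bsub>A\<^esub>" using T_pow_n nk by simp
    then have "g (Suc k) = \<zero>\<^bsub>A\<^esub>" unfolding g_def
      by (simp add: QA.r_null cst_closed fc Tm_closed m)
    then show ?thesis using QA.finsum_Suc[OF gpi] QA.finsum_closed[OF gpi] by simp
  qed
  also have "\<dots> = (\<Oplus>\<^bsub>A\<^esub> i\<in>{..k}. g (Suc i))"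
  proof -
    have "T [^]\<^bsub>A\<^esub> n \<odot>\<^bsub>M\<^esub> m = \<zero>\<^bsub>M\<^esub>" using T_pow_n m by simp
    then have "g 0 = \<zero>\<^bsub>A\<^esub>" unfolding g_def using f0 cst_zero by simp
    then show ?thesis using QA.finsum_Suc2[OF gpi] QA.finsum_closed[OF gpi2] by simp
  qed
  also have "\<dots> = (\<Oplus>\<^bsub>A\<^esub> i\<in>{..k}. T \<otimes>\<^bsub>A\<^esub> (cst (f (T [^]\<^bsub>A\<^esub> (k - i) \<odot>\<^bsub>M\<^esub> m)) \<otimes>\<^bsub>A\<^esub> T [^]\<^bsub>A\<^esub> i))"
  proof (rule QA.finsum_cong'[OF refl])
    show "(\<lambda>i. T \<otimes>\<^bsub>A\<^esub> (cst (f (T [^]\<^bsub>A\<^esub> (k - i) \<odot>\<^bsub>M\<^esub> m)) \<otimes>\<^bsub>A\<^esub> T [^]\<^bsub>A\<^esub> i)) \<in> {..k} \<rightarrow> carrier A"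
      by (intro Pi_I QA.m_closed T_closed term_closed fc Tm_closed m)
    fix i
    have ni: "n - Suc i = k - i" using nk by simp
    have c: "cst (f (T [^]\<^bsub>A\<^esub> (k - i) \<odot>\<^bsub>M\<^esub> m)) \<in> carrier A" by (intro cst_closed fc Tm_closed m)
    have "T \<otimes>\<^bsub>A\<^esub> (cst (f (T [^]\<^bsub>A\<^esub> (k - i) \<odot>\<^bsub>M\<^esub> m)) \<otimes>\<^bsub>A\<^esub> T [^]\<^bsub>A\<^esub> i)
       = cst (f (T [^]\<^bsub>A\<^esub> (k - i) \<odot>\<^bsub>M\<^esub> m)) \<otimes>\<^bsub>A\<^esub> (T \<otimes>\<^bsub>A\<^esub> T [^]\<^bsub>A\<^esub> i)"
      using QA.m_lcomm[OF T_closed c tc] by simp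
    also have "T \<otimes>\<^bsub>A\<^esub> T [^]\<^bsub>A\<^esub> i = T [^]\<^bsub>A\<^esub> Suc i" using QA.nat_pow_Suc2[OF T_closed] by simp
    finally show "g (Suc i) = T \<otimes>\<^bsub>A\<^esub> (cst (f (T [^]\<^bsub>A\<^esub> (k - i) \<odot>\<^bsub>M\<^esub> m)) \<otimes>\<^bsub>A\<^esub> T [^]\<^bsub>A\<^esub> i)"
      unfolding g_def ni by simp
  qed
  also have "\<dots> = T \<otimes>\<^bsub>A\<^esub> phi f m"
    unfolding phi_def unfolding nk1
    by (rule QA.finsum_rdistr[symmetric, OF finite_atMost T_closed])
      (intro Pi_I term_closed fc Tm_closed m)
  finally show ?thesis .
qed

lemma phi_Tpow: "m \<in> carrier M \<Longrightarrow> phi f (T [^]\<^bsub>A\<^esub> (i::nat) \<odot>\<^bsub>M\<^esub> m) = T [^]\<^bsub>A\<^esub> i \<otimes>\<^bsub>A\<^esub> phi f m"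
proof (induction i arbitrary: m)
  case 0 then show ?case using phi_closed by simp
next
  case (Suc i)
  have tc: "T [^]\<^bsub>A\<^esub> i \<in> carrier A" by (intro QA.nat_pow_closed T_closed)
  have "T [^]\<^bsub>A\<^esub> Suc i \<odot>\<^bsub>M\<^esub> m = T [^]\<^bsub>A\<^esub> i \<odot>\<^bsub>M\<^esub> (T \<odot>\<^bsub>M\<^esub> m)"
    using MA.smult_assoc1[OF tc T_closed Suc.prems] by simp
  then have "phi f (T [^]\<^bsub>A\<^esub> Suc i \<odot>\<^bsub>M\<^esub> m) = T [^]\<^bsub>A\<^esub> i \<otimes>\<^bsub>A\<^esub> (T \<otimes>\<^bsub>A\<^esub> phi f m)"
    using Suc.IH[of "T \<odot>\<^bsub>M\<^esub> m"] phi_T[OF Suc.prems] T_closed Suc.prems by simp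
  also have "\<dots> = T [^]\<^bsub>A\<^esub> Suc i \<otimes>\<^bsub>A\<^esub> phi f m"
    using QA.m_assoc[OF tc T_closed phi_closed[OF Suc.prems]] by simp
  finally show ?case .
qed

lemma phi_lin: assumes a: "a \<in> carrier A" shows "\<forall>m\<in>carrier M. phi f (a \<odot>\<^bsub>M\<^esub> m) = a \<otimes>\<^bsub>A\<^esub> phi f m"
proof (rule A_induct[where Q = "\<lambda>a. \<forall>m\<in>carrier M. phi f (a \<odot>\<^bsub>M\<^esub> m) = a \<otimes>\<^bsub>A\<^esub> phi f m"])
  show "\<forall>m\<in>carrier M. phi f (\<zero>\<^bsub>A\<^esub> \<odot>\<^bsub>M\<^esub> m) = \<zero>\<^bsub>A\<^esub> \<otimes>\<^bsub>A\<^esub> phi f m"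
    using phi_zero0 phi_closed by simp
next
  fix a b assume ab: "a \<in> carrier A" "b \<in> carrier A"
    and ha: "\<forall>m\<in>carrier M. phi f (a \<odot>\<^bsub>M\<^esub> m) = a \<otimes>\<^bsub>A\<^esub> phi f m"
    and hb: "\<forall>m\<in>carrier M. phi f (b \<odot>\<^bsub>M\<^esub> m) = b \<otimes>\<^bsub>A\<^esub> phi f m"
  show "\<forall>m\<in>carrier M. phi f ((a \<oplus>\<^bsub>A\<^esub> b) \<odot>\<^bsub>M\<^esub> m) = (a \<oplus>\<^bsub>A\<^esub> b) \<otimes>\<^bsub>A\<^esub> phi f m"
  proof
    fix m assume m: "m \<in> carrier M"
    have "phi f ((a \<oplus>\<^bsub>A\<^esub> b) \<odot>\<^bsub>M\<^esub> m) = phi f (a \<odot>\<^bsub>M\<^esub> m \<oplus>\<^bsub>M\<^esub> b \<odot>\<^bsub>M\<^esub> m)"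
      using MA.smult_l_distr[OF ab m] by simp
    also have "\<dots> = a \<otimes>\<^bsub>A\<^esub> phi f m \<oplus>\<^bsub>A\<^esub> b \<otimes>\<^bsub>A\<^esub> phi f m"
      using phi_add ab m ha hb by simp
    also have "\<dots> = (a \<oplus>\<^bsub>A\<^esub> b) \<otimes>\<^bsub>A\<^esub> phi f m"
      using QA.l_distr[OF ab phi_closed[OF m]] by simp
    finally show "phi f ((a \<oplus>\<^bsub>A\<^esub> b) \<odot>\<^bsub>M\<^esub> m) = (a \<oplus>\<^bsub>A\<^esub> b) \<otimes>\<^bsub>A\<^esub> phi f m" .
  qed
next
  fix c and i :: nat assume c: "c \<in> carrier R"
  show "\<forall>m\<in>carrier M. phi f ((cst c \<otimes>\<^bsub>A\<^esub> T [^]\<^bsub>A\<^esub> i) \<odot>\<^bsub>M\<^esub> m) = (cst c \<otimes>\<^bsub>A\<^esub> T [^]\<^bsub>A\<^esub> i) \<otimes>\<^bsub>A\<^esub> phi f m"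
  proof
    fix m assume m: "m \<in> carrier M"
    have tc: "T [^]\<^bsub>A\<^esub> i \<in> carrier A" by (intro QA.nat_pow_closed T_closed)
    have "phi f ((cst c \<otimes>\<^bsub>A\<^esub> T [^]\<^bsub>A\<^esub> i) \<odot>\<^bsub>M\<^esub> m) = phi f (cst c \<odot>\<^bsub>M\<^esub> (T [^]\<^bsub>A\<^esub> i \<odot>\<^bsub>M\<^esub> m))"
      using MA.smult_assoc1[OF cst_closed[OF c] tc m] by simp
    also have "\<dots> = cst c \<otimes>\<^bsub>A\<^esub> (T [^]\<^bsub>A\<^esub> i \<otimes>\<^bsub>A\<^esub> phi f m)"
      using phi_cst[OF c Tm_closed[OF m]] phi_Tpow[OF m] by simp
    also have "\<dots> = (cst c \<otimes>\<^bsub>A\<^esub> T [^]\<^bsub>A\<^esub> i) \<otimes>\<^bsub>A\<^esub> phi f m"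
      using QA.m_assoc[OF cst_closed[OF c] tc phi_closed[OF m]] by simp
    finally show "phi f ((cst c \<otimes>\<^bsub>A\<^esub> T [^]\<^bsub>A\<^esub> i) \<odot>\<^bsub>M\<^esub> m) = (cst c \<otimes>\<^bsub>A\<^esub> T [^]\<^bsub>A\<^esub> i) \<otimes>\<^bsub>A\<^esub> phi f m" .
  qed
qed (rule a)

lemma phi_zero_imp: assumes m: "m \<in> carrier M" and z: "phi f m = \<zero>\<^bsub>A\<^esub>"
  shows "f m = \<zero>"
proof -
  obtain k where nk: "n = Suc k" using n_pos by (cases n) auto
  have nk1: "n - 1 = k" using nk by simp
  define c where "c i = f (T [^]\<^bsub>A\<^esub> (k - i) \<odot>\<^bsub>M\<^esub> m)" for i
  have cc: "\<And>i. c i \<in> carrier R" unfolding c_def by (intro fc Tm_closed m)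
  define q where "q = (\<Oplus>\<^bsub>P\<^esub> i\<in>{..k}. up_ring.monom P (c i) i)"
  have mpi: "(\<lambda>i. up_ring.monom P (c i) i) \<in> {..k} \<rightarrow> carrier P" using cc by simp
  have q: "q \<in> carrier P" unfolding q_def by (rule P.finsum_closed[OF mpi])
  have "\<pi> q = finsum A (\<pi> \<circ> (\<lambda>i. up_ring.monom P (c i) i)) {..k}"
    unfolding q_def by (rule PI.hom_finsum[OF mpi])
  also have "\<dots> = (\<Oplus>\<^bsub>A\<^esub> i\<in>{..k}. cst (c i) \<otimes>\<^bsub>A\<^esub> T [^]\<^bsub>A\<^esub> i)"
  proof (rule QA.finsum_cong'[OF refl])
    show "(\<lambda>i. cst (c i) \<otimes>\<^bsub>A\<^esub> T [^]\<^bsub>A\<^esub> i) \<in> {..k} \<rightarrow> carrier A"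
      by (intro Pi_I term_closed cc)
    show "\<And>i. i \<in> {..k} \<Longrightarrow> (\<pi> \<circ> (\<lambda>i. up_ring.monom P (c i) i)) i = cst (c i) \<otimes>\<^bsub>A\<^esub> T [^]\<^bsub>A\<^esub> i"
      unfolding comp_def by (rule pi_monom[OF cc])
  qed
  also have "\<dots> = phi f m" unfolding phi_def c_def unfolding nk1 by simp
  finally have "\<pi> q = \<zero>\<^bsub>A\<^esub>" using z by simp
  then have "q \<in> J" using pi_zero_iff[OF q] by simp
  then have "up_ring.coeff P q k = \<zero>" using J_char nk1 n_pos by auto
  moreover have "up_ring.coeff P q k = (\<Oplus>i\<in>{..k}. up_ring.coeff P (up_ring.monom P (c i) i) k)"
    unfolding q_def by (rule coeff_finsum[OF _ mpi]) simp
  moreover have "\<dots> = (\<Oplus>i\<in>{..k}. (if i = k then c i else \<zero>))"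
    by (rule R.finsum_cong') (auto simp: cc)
  moreover have "\<dots> = c k"
    by (rule R.add.finprod_singleton_swap) (auto simp: cc)
  moreover have "c k = f m" unfolding c_def using m by simp
  ultimately show ?thesis by simp
qed

end
end



lemma fm_carrier: "carrier (free_module A I) = {f \<in> I \<rightarrow>\<^sub>E carrier A. finite {i \<in> I. f i \<noteq> \<zero>\<^bsub>A\<^esub>}}"
  by (simp add: free_module_def)
lemma fm_add: "x \<oplus>\<^bsub>free_module A I\<^esub> y = (\<lambda>i\<in>I. x i \<oplus>\<^bsub>A\<^esub> y i)"
  by (simp add: free_module_def)
lemma fm_zero: "\<zero>\<^bsub>free_module A I\<^esub> = (\<lambda>i\<in>I. \<zero>\<^bsub>A\<^esub>)"
  by (simp add: free_module_def)
lemma fm_smult: "a \<odot>\<^bsub>free_module A I\<^esub> x = (\<lambda>i\<in>I. a \<otimes>\<^bsub>A\<^esub> x i)"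
  by (simp add: free_module_def)

lemma fm_module:
  assumes A: "cring A"
  shows "module A (free_module A I)"
proof -
  interpret A: cring A by (rule A)
  have sub_add: "{i \<in> I. x i \<oplus>\<^bsub>A\<^esub> y i \<noteq> \<zero>\<^bsub>A\<^esub>} \<subseteq> {i \<in> I. x i \<noteq> \<zero>\<^bsub>A\<^esub>} \<union> {i \<in> I. y i \<noteq> \<zero>\<^bsub>A\<^esub>}"
    if "x \<in> I \<rightarrow>\<^sub>E carrier A" "y \<in> I \<rightarrow>\<^sub>E carrier A" for x y
    using that by auto
  have sub_sm: "{i \<in> I. a \<otimes>\<^bsub>A\<^esub> x i \<noteq> \<zero>\<^bsub>A\<^esub>} \<subseteq> {i \<in> I. x i \<noteq> \<zero>\<^bsub>A\<^esub>}"
    if "x \<in> I \<rightarrow>\<^sub>E carrier A" "a \<in> carrier A" for x a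
    using that by auto
  have pe: "\<And>f i. f \<in> I \<rightarrow>\<^sub>E carrier A \<Longrightarrow> i \<in> I \<Longrightarrow> f i \<in> carrier A" by auto
  show ?thesis
  proof (rule moduleI)
    show "cring A" by (rule A)
    show "abelian_group (free_module A I)"
    proof (rule abelian_groupI, unfold fm_carrier fm_add fm_zero)
      fix x y assume "x \<in> {f \<in> I \<rightarrow>\<^sub>E carrier A. finite {i \<in> I. f i \<noteq> \<zero>\<^bsub>A\<^esub>}}" "y \<in> {f \<in> I \<rightarrow>\<^sub>E carrier A. finite {i \<in> I. f i \<noteq> \<zero>\<^bsub>A\<^esub>}}"
      then show "(\<lambda>i\<in>I. x i \<oplus>\<^bsub>A\<^esub> y i) \<in> {f \<in> I \<rightarrow>\<^sub>E carrier A. finite {i \<in> I. f i \<noteq> \<zero>\<^bsub>A\<^esub>}}"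
        using sub_add[of x y] by (auto intro: finite_subset)
    next
      show "(\<lambda>i\<in>I. \<zero>\<^bsub>A\<^esub>) \<in> {f \<in> I \<rightarrow>\<^sub>E carrier A. finite {i \<in> I. f i \<noteq> \<zero>\<^bsub>A\<^esub>}}" by auto
    next
      fix x y z assume xyz: "x \<in> {f \<in> I \<rightarrow>\<^sub>E carrier A. finite {i \<in> I. f i \<noteq> \<zero>\<^bsub>A\<^esub>}}" "y \<in> {f \<in> I \<rightarrow>\<^sub>E carrier A. finite {i \<in> I. f i \<noteq> \<zero>\<^bsub>A\<^esub>}}"
        "z \<in> {f \<in> I \<rightarrow>\<^sub>E carrier A. finite {i \<in> I. f i \<noteq> \<zero>\<^bsub>A\<^esub>}}"
      show "(\<lambda>i\<in>I. (\<lambda>i\<in>I. x i \<oplus>\<^bsub>A\<^esub> y i) i \<oplus>\<^bsub>A\<^esub> z i) = (\<lambda>i\<in>I. x i \<oplus>\<^bsub>A\<^esub> (\<lambda>i\<in>I. y i \<oplus>\<^bsub>A\<^esub> z i) i)"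
      proof (intro restrict_ext)
        fix i assume i: "i \<in> I"
        have "x i \<in> carrier A" "y i \<in> carrier A" "z i \<in> carrier A" using xyz i by (auto simp: PiE_iff)
        then show "(\<lambda>i\<in>I. x i \<oplus>\<^bsub>A\<^esub> y i) i \<oplus>\<^bsub>A\<^esub> z i = x i \<oplus>\<^bsub>A\<^esub> (\<lambda>i\<in>I. y i \<oplus>\<^bsub>A\<^esub> z i) i"
          using i by (simp add: A.a_assoc)
      qed
    next
      fix x y assume "x \<in> {f \<in> I \<rightarrow>\<^sub>E carrier A. finite {i \<in> I. f i \<noteq> \<zero>\<^bsub>A\<^esub>}}" "y \<in> {f \<in> I \<rightarrow>\<^sub>E carrier A. finite {i \<in> I. f i \<noteq> \<zero>\<^bsub>A\<^esub>}}"
      then show "(\<lambda>i\<in>I. x i \<oplus>\<^bsub>A\<^esub> y i) = (\<lambda>i\<in>I. y i \<oplus>\<^bsub>A\<^esub> x i)"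
        by (intro restrict_ext) (auto simp: A.a_comm pe)
    next
      fix x assume x: "x \<in> {f \<in> I \<rightarrow>\<^sub>E carrier A. finite {i \<in> I. f i \<noteq> \<zero>\<^bsub>A\<^esub>}}"
      then show "(\<lambda>i\<in>I. (\<lambda>i\<in>I. \<zero>\<^bsub>A\<^esub>) i \<oplus>\<^bsub>A\<^esub> x i) = x"
        by (auto simp: PiE_def extensional_def restrict_def fun_eq_iff Pi_iff)
    next
      fix x assume x: "x \<in> {f \<in> I \<rightarrow>\<^sub>E carrier A. finite {i \<in> I. f i \<noteq> \<zero>\<^bsub>A\<^esub>}}"
      let ?y = "\<lambda>i\<in>I. \<ominus>\<^bsub>A\<^esub> x i"
      have "{i \<in> I. ?y i \<noteq> \<zero>\<^bsub>A\<^esub>} \<subseteq> {i \<in> I. x i \<noteq> \<zero>\<^bsub>A\<^esub>}" using x by auto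
      then have "finite {i \<in> I. ?y i \<noteq> \<zero>\<^bsub>A\<^esub>}" by (rule finite_subset) (use x in simp)
      moreover have "?y \<in> I \<rightarrow>\<^sub>E carrier A" using x pe by auto
      ultimately have "?y \<in> {f \<in> I \<rightarrow>\<^sub>E carrier A. finite {i \<in> I. f i \<noteq> \<zero>\<^bsub>A\<^esub>}}" by blast
      moreover have "(\<lambda>i\<in>I. ?y i \<oplus>\<^bsub>A\<^esub> x i) = (\<lambda>i\<in>I. \<zero>\<^bsub>A\<^esub>)"
        using x by (intro restrict_ext) (auto simp: A.l_neg pe)
      ultimately show "\<exists>y\<in>{f \<in> I \<rightarrow>\<^sub>E carrier A. finite {i \<in> I. f i \<noteq> \<zero>\<^bsub>A\<^esub>}}. (\<lambda>i\<in>I. y i \<oplus>\<^bsub>A\<^esub> x i) = (\<lambda>i\<in>I. \<zero>\<^bsub>A\<^esub>)"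
        by blast
    qed
  next
    fix a x assume "a \<in> carrier A" "x \<in> carrier (free_module A I)"
    then show "a \<odot>\<^bsub>free_module A I\<^esub> x \<in> carrier (free_module A I)"
      unfolding fm_carrier fm_smult using sub_sm[of x a] by (auto intro: finite_subset)
  next
    fix a b x assume "a \<in> carrier A" "b \<in> carrier A" "x \<in> carrier (free_module A I)"
    then show "(a \<oplus>\<^bsub>A\<^esub> b) \<odot>\<^bsub>free_module A I\<^esub> x = a \<odot>\<^bsub>free_module A I\<^esub> x \<oplus>\<^bsub>free_module A I\<^esub> b \<odot>\<^bsub>free_module A I\<^esub> x"
      unfolding fm_carrier fm_smult fm_add by (intro restrict_ext) (auto simp: A.l_distr pe)
  next
    fix a x y assume "a \<in> carrier A" "x \<in> carrier (free_module A I)" "y \<in> carrier (free_module A I)"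
    then show "a \<odot>\<^bsub>free_module A I\<^esub> (x \<oplus>\<^bsub>free_module A I\<^esub> y) = a \<odot>\<^bsub>free_module A I\<^esub> x \<oplus>\<^bsub>free_module A I\<^esub> a \<odot>\<^bsub>free_module A I\<^esub> y"
      unfolding fm_carrier fm_smult fm_add by (intro restrict_ext) (auto simp: A.r_distr pe)
  next
    fix a b x assume "a \<in> carrier A" "b \<in> carrier A" "x \<in> carrier (free_module A I)"
    then show "(a \<otimes>\<^bsub>A\<^esub> b) \<odot>\<^bsub>free_module A I\<^esub> x = a \<odot>\<^bsub>free_module A I\<^esub> (b \<odot>\<^bsub>free_module A I\<^esub> x)"
      unfolding fm_carrier fm_smult by (intro restrict_ext) (auto simp: A.m_assoc pe)
  next
    fix x assume "x \<in> carrier (free_module A I)"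
    then show "\<one>\<^bsub>A\<^esub> \<odot>\<^bsub>free_module A I\<^esub> x = x"
      unfolding fm_carrier fm_smult by (auto simp: PiE_def extensional_def restrict_def fun_eq_iff Pi_iff)
  qed
qed

lemma converse_dir:
  assumes A: "cring A" and M: "module A M"
    and iso: "iso_to_submodule A M (free_module A I)"
  shows "torsion_free A M"
proof -
  interpret A: cring A by (rule A)
  interpret M: module A M by (rule M)
  interpret F: module A "free_module A I" by (rule fm_module[OF A])
  obtain N h where N: "submodule N A (free_module A I)" and h: "h \<in> module_hom A M (free_module A I)"
    and bij: "bij_betw h (carrier M) N"
    using iso unfolding iso_to_submodule_def by blast
  have hc: "\<And>m. m \<in> carrier M \<Longrightarrow> h m \<in> carrier (free_module A I)" using h unfolding module_hom_def by auto
  have hadd: "\<And>x y. x \<in> carrier M \<Longrightarrow> y \<in> carrier M \<Longrightarrow> h (x \<oplus>\<^bsub>M\<^esub> y) = h x \<oplus>\<^bsub>free_module A I\<^esub> h y"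
    using h unfolding module_hom_def by auto
  have hsm: "\<And>a x. a \<in> carrier A \<Longrightarrow> x \<in> carrier M \<Longrightarrow> h (a \<odot>\<^bsub>M\<^esub> x) = a \<odot>\<^bsub>free_module A I\<^esub> h x"
    using h unfolding module_hom_def by auto
  have inj: "inj_on h (carrier M)" using bij by (rule bij_betw_imp_inj_on)
  have h0: "h \<zero>\<^bsub>M\<^esub> = \<zero>\<^bsub>free_module A I\<^esub>"
  proof -
    have z: "\<zero>\<^bsub>M\<^esub> \<in> carrier M" by simp
    have "h \<zero>\<^bsub>M\<^esub> \<oplus>\<^bsub>free_module A I\<^esub> h \<zero>\<^bsub>M\<^esub> = h \<zero>\<^bsub>M\<^esub> \<oplus>\<^bsub>free_module A I\<^esub> \<zero>\<^bsub>free_module A I\<^esub>"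
      using hadd[OF z z] hc[OF z] by simp
    then show ?thesis using F.ag_lc[OF hc[OF z] hc[OF z] F.zero_closed] by simp
  qed
  show ?thesis unfolding torsion_free_def
  proof
    show "torsion A M \<subseteq> {\<zero>\<^bsub>M\<^esub>}"
    proof
      fix m assume "m \<in> torsion A M"
      then obtain \<alpha> where m: "m \<in> carrier M" and al: "\<alpha> \<in> non_zero_divisors A" and z: "\<alpha> \<odot>\<^bsub>M\<^esub> m = \<zero>\<^bsub>M\<^esub>"
        unfolding torsion_def by blast
      have alc: "\<alpha> \<in> carrier A" and alz: "\<And>v. v \<in> carrier A \<Longrightarrow> \<alpha> \<otimes>\<^bsub>A\<^esub> v = \<zero>\<^bsub>A\<^esub> \<Longrightarrow> v = \<zero>\<^bsub>A\<^esub>"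
        using al unfolding non_zero_divisors_def by auto
      have "\<alpha> \<odot>\<^bsub>free_module A I\<^esub> h m = \<zero>\<^bsub>free_module A I\<^esub>" using hsm[OF alc m] z h0 by simp
      then have e: "(\<lambda>i\<in>I. \<alpha> \<otimes>\<^bsub>A\<^esub> h m i) = (\<lambda>i\<in>I. \<zero>\<^bsub>A\<^esub>)" unfolding fm_smult fm_zero .
      have hm: "h m \<in> I \<rightarrow>\<^sub>E carrier A" using hc[OF m] unfolding fm_carrier by simp
      have "h m = (\<lambda>i\<in>I. \<zero>\<^bsub>A\<^esub>)"
      proof
        fix i show "h m i = (\<lambda>i\<in>I. \<zero>\<^bsub>A\<^esub>) i"
        proof (cases "i \<in> I")
          case True
          then have "\<alpha> \<otimes>\<^bsub>A\<^esub> h m i = \<zero>\<^bsub>A\<^esub>" using fun_cong[OF e, of i] by simp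
          then show ?thesis using alz[of "h m i"] hm True by auto
        next
          case False then show ?thesis using hm by (auto simp: PiE_def extensional_def)
        qed
      qed
      then have "h m = h \<zero>\<^bsub>M\<^esub>" using h0 unfolding fm_zero by simp
      then show "m \<in> {\<zero>\<^bsub>M\<^esub>}" using inj m unfolding inj_on_def by auto
    qed
  next
    have "\<one>\<^bsub>A\<^esub> \<in> non_zero_divisors A" unfolding non_zero_divisors_def by auto
    moreover have "\<one>\<^bsub>A\<^esub> \<odot>\<^bsub>M\<^esub> \<zero>\<^bsub>M\<^esub> = \<zero>\<^bsub>M\<^esub>" by simp
    ultimately have "\<zero>\<^bsub>M\<^esub> \<in> torsion A M" unfolding torsion_def using M.zero_closed by blast
    then show "{\<zero>\<^bsub>M\<^esub>} \<subseteq> torsion A M" by simp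
  qed
qed

context TPM
begin

lemma embed:
  assumes tf: "torsion_free A M" and fg: "finitely_generated_module A M"
  shows "\<exists>I :: nat set. iso_to_submodule A M (free_module A I)"
proof -
  obtain G where G: "set G \<subseteq> carrier M" "spn R MR G = carrier M" using spans[OF fg] by blast
  have GR: "set G \<subseteq> carrier MR" using G by simp
  have tfR: "\<And>r x. r \<in> carrier R \<Longrightarrow> x \<in> carrier MR \<Longrightarrow> r \<noteq> \<zero> \<Longrightarrow> r \<odot>\<^bsub>MR\<^esub> x = \<zero>\<^bsub>MR\<^esub> \<Longrightarrow> x = \<zero>\<^bsub>MR\<^esub>"
    by (rule R_tf[OF tf])
  have ex: "\<exists>fs. (\<forall>f\<in>set fs. lin R MR (spn R MR G) f) \<and>
     (\<forall>m\<in>spn R MR G. (\<forall>f\<in>set fs. f m = \<zero>) \<longrightarrow> m = \<zero>\<^bsub>MR\<^esub>)"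
    by (rule module.functionals_exist[OF MR_module tfR GR])
  then obtain fs where fl0: "\<forall>f\<in>set fs. lin R MR (spn R MR G) f"
    and fi0: "\<forall>m\<in>spn R MR G. (\<forall>f\<in>set fs. f m = \<zero>) \<longrightarrow> m = \<zero>\<^bsub>MR\<^esub>"
    by (elim exE conjE)
  have fl: "\<And>f. f \<in> set fs \<Longrightarrow> lin R MR (carrier M) f" using fl0 G(2) by simp
  have fi: "\<And>m. m \<in> carrier M \<Longrightarrow> (\<forall>f\<in>set fs. f m = \<zero>) \<Longrightarrow> m = \<zero>\<^bsub>M\<^esub>" using fi0 G(2) by simp
  define I where "I = {..<length fs}"
  have finI: "finite I" unfolding I_def by simp
  have flj: "\<And>j. j \<in> I \<Longrightarrow> lin R MR (carrier M) (fs ! j)" using fl unfolding I_def by simp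
  define h where "h m = (\<lambda>j\<in>I. phi (fs ! j) m)" for m
  interpret F: module A "free_module A I" by (rule fm_module[OF A_cring])
  have hc: "h m \<in> carrier (free_module A I)" if m: "m \<in> carrier M" for m
  proof -
    have "h m \<in> I \<rightarrow>\<^sub>E carrier A" unfolding h_def using phi_closed[OF flj m] by auto
    moreover have "finite {i \<in> I. h m i \<noteq> \<zero>\<^bsub>A\<^esub>}" using finI by simp
    ultimately show ?thesis unfolding fm_carrier by simp
  qed
  have hadd: "h (m \<oplus>\<^bsub>M\<^esub> m') = h m \<oplus>\<^bsub>free_module A I\<^esub> h m'" if "m \<in> carrier M" "m' \<in> carrier M" for m m'
    unfolding fm_add h_def by (intro restrict_ext) (simp add: phi_add[OF flj that(1) that(2)])
  have hsm: "h (a \<odot>\<^bsub>M\<^esub> m) = a \<odot>\<^bsub>free_module A I\<^esub> h m" if "a \<in> carrier A" "m \<in> carrier M" for a m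
    unfolding fm_smult h_def by (intro restrict_ext) (use phi_lin[OF flj that(1)] that(2) in simp)
  have h0: "h \<zero>\<^bsub>M\<^esub> = \<zero>\<^bsub>free_module A I\<^esub>"
    unfolding fm_zero h_def by (intro restrict_ext) (simp add: phi_zero0[OF flj])
  have hom: "h \<in> module_hom A M (free_module A I)"
    unfolding module_hom_def using hc hadd hsm by auto
  have inj: "inj_on h (carrier M)"
  proof (rule inj_onI)
    fix m m' assume m: "m \<in> carrier M" and m': "m' \<in> carrier M" and e: "h m = h m'"
    let ?d = "m \<oplus>\<^bsub>M\<^esub> (\<ominus>\<^bsub>A\<^esub> \<one>\<^bsub>A\<^esub>) \<odot>\<^bsub>M\<^esub> m'"
    have n1: "\<ominus>\<^bsub>A\<^esub> \<one>\<^bsub>A\<^esub> \<in> carrier A" by simp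
    have neg: "(\<ominus>\<^bsub>A\<^esub> \<one>\<^bsub>A\<^esub>) \<odot>\<^bsub>M\<^esub> m' = \<ominus>\<^bsub>M\<^esub> m'"
      using MA.smult_l_minus[OF QA.one_closed m'] m' by simp
    have dc: "?d \<in> carrier M" using m m' n1 by simp
    have "\<forall>f\<in>set fs. f ?d = \<zero>"
    proof
      fix f assume "f \<in> set fs"
      then obtain j where j: "j \<in> I" "f = fs ! j" unfolding I_def by (auto simp: in_set_conv_nth)
      have pe: "phi f m = phi f m'" using fun_cong[OF e, of j] j unfolding h_def by simp
      have "phi f ?d = phi f m \<oplus>\<^bsub>A\<^esub> (\<ominus>\<^bsub>A\<^esub> \<one>\<^bsub>A\<^esub>) \<otimes>\<^bsub>A\<^esub> phi f m'"
        using phi_add[OF flj[OF j(1)] m MA.smult_closed[OF n1 m']] phi_lin[OF flj[OF j(1)] n1] m' j by simp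
      also have "\<dots> = \<zero>\<^bsub>A\<^esub>"
        using pe phi_closed[OF flj[OF j(1)] m] j by (simp add: QA.l_minus QA.r_neg)
      finally show "f ?d = \<zero>" using phi_zero_imp[OF flj[OF j(1)] dc] j by simp
    qed
    then have "?d = \<zero>\<^bsub>M\<^esub>" using fi dc by simp
    then have "m \<oplus>\<^bsub>M\<^esub> \<ominus>\<^bsub>M\<^esub> m' = \<zero>\<^bsub>M\<^esub>" using neg by simp
    then have "\<ominus>\<^bsub>M\<^esub> (\<ominus>\<^bsub>M\<^esub> m') = m" using MA.minus_equality m m' by simp
    then show "m = m'" using MA.minus_minus m' by simp
  qed
  have sub: "submodule (h ` carrier M) A (free_module A I)"
  proof (rule F.submoduleI)
    show "h ` carrier M \<subseteq> carrier (free_module A I)" using hc by auto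
    show "\<zero>\<^bsub>free_module A I\<^esub> \<in> h ` carrier M" using h0[symmetric] MA.zero_closed by blast
  next
    fix x assume "x \<in> h ` carrier M"
    then obtain m where m: "m \<in> carrier M" "x = h m" by auto
    have "\<ominus>\<^bsub>free_module A I\<^esub> x = (\<ominus>\<^bsub>A\<^esub> \<one>\<^bsub>A\<^esub>) \<odot>\<^bsub>free_module A I\<^esub> x"
      using F.smult_l_minus[OF QA.one_closed hc[OF m(1)]] hc[OF m(1)] m(2) by simp
    also have "\<dots> = h ((\<ominus>\<^bsub>A\<^esub> \<one>\<^bsub>A\<^esub>) \<odot>\<^bsub>M\<^esub> m)" using hsm[of "\<ominus>\<^bsub>A\<^esub> \<one>\<^bsub>A\<^esub>" m] m by simp
    finally have eq: "\<ominus>\<^bsub>free_module A I\<^esub> x = h ((\<ominus>\<^bsub>A\<^esub> \<one>\<^bsub>A\<^esub>) \<odot>\<^bsub>M\<^esub> m)" .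
    have "(\<ominus>\<^bsub>A\<^esub> \<one>\<^bsub>A\<^esub>) \<odot>\<^bsub>M\<^esub> m \<in> carrier M" using m(1) by simp
    with eq show "\<ominus>\<^bsub>free_module A I\<^esub> x \<in> h ` carrier M" by (rule image_eqI)
  next
    fix x y assume "x \<in> h ` carrier M" "y \<in> h ` carrier M"
    then obtain m m' where mm: "m \<in> carrier M" "x = h m" "m' \<in> carrier M" "y = h m'" by auto
    then have "x \<oplus>\<^bsub>free_module A I\<^esub> y = h (m \<oplus>\<^bsub>M\<^esub> m')" using hadd[of m m'] by simp
    moreover have "m \<oplus>\<^bsub>M\<^esub> m' \<in> carrier M" using mm by simp
    ultimately show "x \<oplus>\<^bsub>free_module A I\<^esub> y \<in> h ` carrier M" by (rule image_eqI)
  next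
    fix a x assume a: "a \<in> carrier A" and "x \<in> h ` carrier M"
    then obtain m where mm: "m \<in> carrier M" "x = h m" by auto
    then have "a \<odot>\<^bsub>free_module A I\<^esub> x = h (a \<odot>\<^bsub>M\<^esub> m)" using hsm[of a m] a by simp
    moreover have "a \<odot>\<^bsub>M\<^esub> m \<in> carrier M" using mm a by simp
    ultimately show "a \<odot>\<^bsub>free_module A I\<^esub> x \<in> h ` carrier M" by (rule image_eqI)
  qed
  have "iso_to_submodule A M (free_module A I)"
    unfolding iso_to_submodule_def
    by (intro exI conjI) (rule sub, rule hom, rule inj_on_imp_bij_betw[OF inj])
  then show ?thesis by (rule exI)
qed

end

theorem proposition3p4p1:
  fixes R :: "('a, 'r) ring_scheme" and n :: nat
    and M :: "((nat \<Rightarrow> 'a) set, 'm, 'x) module_scheme"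
  assumes "noetherian_domain R"
    and "n \<ge> 1"
    and "module (trunc_poly_ring R n) M"
    and "finitely_generated_module (trunc_poly_ring R n) M"
  shows "(torsion_free (trunc_poly_ring R n) M \<longrightarrow>
            (\<exists>I :: nat set. iso_to_submodule (trunc_poly_ring R n) M (free_module (trunc_poly_ring R n) I)))
       \<and> (\<forall>I :: 'i set. iso_to_submodule (trunc_poly_ring R n) M (free_module (trunc_poly_ring R n) I)
            \<longrightarrow> torsion_free (trunc_poly_ring R n) M)"
proof
  have dom: "domain R" using assms(1) by (rule noetherian_domain.axioms(2))
  have eqA: "trunc_poly_ring R n = UP R Quot (PIdl\<^bsub>UP R\<^esub> (up_ring.monom (UP R) \<one>\<^bsub>R\<^esub> n))"
    unfolding trunc_poly_ring_def by (rule refl)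
  have tpm: "TPM R n M"
  proof (intro TPM.intro TP.intro TPM_axioms.intro TP_axioms.intro)
    show "UP_domain R" unfolding UP_domain_def by (rule dom)
    show "1 \<le> n" by (rule assms(2))
    show "module (UP R Quot (PIdl\<^bsub>UP R\<^esub> (up_ring.monom (UP R) \<one>\<^bsub>R\<^esub> n))) M"
      using assms(3) unfolding eqA .
  qed
  show "torsion_free (trunc_poly_ring R n) M \<longrightarrow>
            (\<exists>I :: nat set. iso_to_submodule (trunc_poly_ring R n) M (free_module (trunc_poly_ring R n) I))"
    using TPM.embed[OF tpm] assms(4) unfolding eqA by blast
  have cr: "cring (trunc_poly_ring R n)" using assms(3) by (rule module.axioms(1))
  show "\<forall>I :: 'i set. iso_to_submodule (trunc_poly_ring R n) M (free_module (trunc_poly_ring R n) I)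
            \<longrightarrow> torsion_free (trunc_poly_ring R n) M"
    using converse_dir[OF cr assms(3)] by blast
qed


end
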